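(* Let $\pi$ be a probability density on $\mathbb{R}^d$ with $\pi(x)>0$ for all $x$ and $\log\pi\in C^1(\mathbb{R}^d)$, and assume: (i) $\pi(x)=\pi_1(x_1)\pi_{2:d}(x_2,\dots,x_d)$ for some densities $\pi_1$ on $\mathbb{R}$ and $\pi_{2:d}$ on $\mathbb{R}^{d-1}$; (ii) for some $q\in[0,1)$, $\left|\frac{d}{dx_1}\log\pi_1(x_1)\right|=\Theta(|x_1|^q)$ as $|x_1|\to\infty$. For $\lambda>0$ let $\pi^{(\lambda)}(x):=\lambda^{-1}\pi(x_1/\lambda,x_2,\dots,x_d)$, fix $\sigma>0$, and let $P^M_\lambda$ be the Metropolis--Hastings kernel with target $\pi^{(\lambda)}$ and MALA candidate kernel $Q^M_\lambda(x,\cdot)=N\big(x+\frac{\sigma^2}{2}\nabla\log\pi^{(\lambda)}(x),\sigma^2\mathbb{I}_d\big)$. Then there is $\gamma>0$ such that $\mathrm{Gap}(P^M_\lambda)\le\Theta\big(e^{-\gamma\lambda^{-(1+q)}+q\log\lambda}\big)$ as $\lambda\downarrow0$, i.e. $\limsup_{\lambda\downarrow0}\mathrm{Gap}(P^M_\lambda)\,e^{\gamma\lambda^{-(1+q)}-q\log\lambda}<\infty$.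
   Context: Metropolis--Hastings kernel with target density $\pi$ and candidate kernel $Q(x,dy)=q(x,y)dy$: $P(x,dy)=\alpha(x,y)Q(x,dy)+r(x)\delta_x(dy)$ with $\alpha(x,y)=\min\{1,\pi(y)q(y,x)/(\pi(x)q(x,y))\}$ and $r(x)=1-\int\alpha(x,y)Q(x,dy)$. $\mathrm{Gap}(P)=\inf_{f\in L^2_{0,1}(\pi)}\frac12\int (f(y)-f(x))^2\pi(dx)P(x,dy)$ with $L^2_{0,1}(\pi)=\{f:\mathbb{E}_\pi f=0,\mathrm{Var}_\pi f=1\}$. $F=\Theta(G)$ as $|x_1|\to\infty$ means $\liminf F/G>0$ and $\limsup F/G<\infty$. *)

theory Defs
  imports "HOL-Analysis.Analysis"
begin

definition grad :: "(real^'n \<Rightarrow> real) \<Rightarrow> real^'n \<Rightarrow> real^'n" where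
  "grad f x = (\<chi> i. frechet_derivative f (at x) (axis i 1))"

definition gauss_dens :: "real \<Rightarrow> real^'n \<Rightarrow> real^'n \<Rightarrow> real" where
  "gauss_dens \<sigma> m y =
     (2 * pi * \<sigma>\<^sup>2) powr (- real CARD('n) / 2) * exp (- (norm (y - m))\<^sup>2 / (2 * \<sigma>\<^sup>2))"

definition mala_q :: "real \<Rightarrow> (real^'n \<Rightarrow> real) \<Rightarrow> real^'n \<Rightarrow> real^'n \<Rightarrow> real" where
  "mala_q \<sigma> p x y = gauss_dens \<sigma> (x + (\<sigma>\<^sup>2 / 2) *\<^sub>R grad (\<lambda>z. ln (p z)) x) y"

definition mh_accept :: "('a \<Rightarrow> real) \<Rightarrow> ('a \<Rightarrow> 'a \<Rightarrow> real) \<Rightarrow> 'a \<Rightarrow> 'a \<Rightarrow> real" where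
  "mh_accept p q x y = min 1 (p y * q y x / (p x * q x y))"

definition mh_rej :: "('a::euclidean_space \<Rightarrow> real) \<Rightarrow> ('a \<Rightarrow> 'a \<Rightarrow> real) \<Rightarrow> 'a \<Rightarrow> ennreal" where
  "mh_rej p q x = 1 - (\<integral>\<^sup>+ y. ennreal (mh_accept p q x y * q x y) \<partial>lborel)"

(* integral of a nonnegative g against the MH kernel P(x,dy) = alpha(x,y) q(x,y) dy + r(x) delta_x(dy) *)
definition mh_kernel_int ::
  "('a::euclidean_space \<Rightarrow> real) \<Rightarrow> ('a \<Rightarrow> 'a \<Rightarrow> real) \<Rightarrow> 'a \<Rightarrow> ('a \<Rightarrow> real) \<Rightarrow> ennreal" where
  "mh_kernel_int p q x g =
     (\<integral>\<^sup>+ y. ennreal (mh_accept p q x y * q x y * g y) \<partial>lborel) + mh_rej p q x * ennreal (g x)"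

definition L2_01 :: "('a::euclidean_space \<Rightarrow> real) \<Rightarrow> ('a \<Rightarrow> real) set" where
  "L2_01 p = {f. f \<in> borel_measurable lborel
              \<and> integrable lborel (\<lambda>x. p x * f x)
              \<and> integrable lborel (\<lambda>x. p x * (f x)\<^sup>2)
              \<and> (\<integral>x. p x * f x \<partial>lborel) = 0
              \<and> (\<integral>x. p x * (f x - (\<integral>z. p z * f z \<partial>lborel))\<^sup>2 \<partial>lborel) = 1}"

definition mh_gap :: "('a::euclidean_space \<Rightarrow> real) \<Rightarrow> ('a \<Rightarrow> 'a \<Rightarrow> real) \<Rightarrow> ennreal" where
  "mh_gap p q = (INF f \<in> L2_01 p.
     ennreal (1/2) * (\<integral>\<^sup>+ x. ennreal (p x) * mh_kernel_int p q x (\<lambda>y. (f y - f x)\<^sup>2) \<partial>lborel))"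

(* pi^(lambda)(x) = lambda^{-1} pi(x_1/lambda, x_2, ..., x_d), first coordinate = index i1 *)
definition pi_scaled :: "'n \<Rightarrow> real \<Rightarrow> (real^'n \<Rightarrow> real) \<Rightarrow> real^'n \<Rightarrow> real" where
  "pi_scaled i1 l p x = p (\<chi> i. if i = i1 then x $ i / l else x $ i) / l"

end

theory Submission
  imports Defs "HOL-Probability.Probability"
begin

definition upd :: "'n \<Rightarrow> real^'n \<Rightarrow> real \<Rightarrow> real^'n" where
  "upd i1 w t = (\<chi> i. if i = i1 then t else w $ i)"

lemma upd_nth: "upd i1 w t $ i = (if i = i1 then t else w $ i)"
  by (simp add: upd_def)

lemma upd_affine: "upd i1 w t = upd i1 w 0 + t *\<^sub>R axis i1 1"
  by (simp add: vec_eq_iff upd_nth axis_def)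

locale mhctx =
  fixes \<pi> :: "real^'n \<Rightarrow> real" and \<pi>1 :: "real \<Rightarrow> real" and \<pi>2 :: "real^'n \<Rightarrow> real"
    and i1 :: 'n and q \<sigma> :: real
  assumes pos: "\<forall>x. \<pi> x > 0"
    and meas: "\<pi> \<in> borel_measurable lborel"
    and dens: "(\<integral>\<^sup>+ x. ennreal (\<pi> x) \<partial>lborel) = 1"
    and C1_diff: "\<forall>x. (\<lambda>z. ln (\<pi> z)) differentiable (at x)"
    and C1_cont: "continuous_on UNIV (grad (\<lambda>z. ln (\<pi> z)))"
    and prod: "\<forall>x. \<pi> x = \<pi>1 (x $ i1) * \<pi>2 x"
    and \<pi>2_indep: "\<forall>x t. \<pi>2 (\<chi> i. if i = i1 then t else x $ i) = \<pi>2 x"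
    and \<pi>1_nonneg: "\<forall>t. \<pi>1 t \<ge> 0"
    and \<pi>1_meas: "\<pi>1 \<in> borel_measurable lborel"
    and \<pi>1_dens: "(\<integral>\<^sup>+ t. ennreal (\<pi>1 t) \<partial>lborel) = 1"
    and \<pi>2_nonneg: "\<forall>x. \<pi>2 x \<ge> 0"
    and \<pi>2_meas: "\<pi>2 \<in> borel_measurable lborel"
    and q: "0 \<le> q" "q < 1"
    and theta_lo: "Liminf at_infinity
                     (\<lambda>t::real. ereal (\<bar>deriv (\<lambda>s. ln (\<pi>1 s)) t\<bar> / \<bar>t\<bar> powr q)) > 0"
    and theta_hi: "Limsup at_infinity
                     (\<lambda>t::real. ereal (\<bar>deriv (\<lambda>s. ln (\<pi>1 s)) t\<bar> / \<bar>t\<bar> powr q)) < \<infinity>"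
    and \<sigma>: "\<sigma> > 0"
begin

abbreviation "Lp \<equiv> (\<lambda>z. ln (\<pi> z))"
abbreviation "G \<equiv> grad Lp"
definition "h t = deriv (\<lambda>s. ln (\<pi>1 s)) t"

lemma \<pi>2_upd: "\<pi>2 (upd i1 x t) = \<pi>2 x"
  using \<pi>2_indep by (simp add: upd_def)

lemma \<pi>_upd: "\<pi> (upd i1 w t) = \<pi>1 t * \<pi>2 w"
  using prod \<pi>2_upd by (simp add: upd_nth)

lemma \<pi>1_pos: "\<pi>1 t > 0" and \<pi>2_pos: "\<pi>2 w > 0"
proof -
  have "\<pi>1 t * \<pi>2 w > 0" using pos \<pi>_upd by metis
  then show "\<pi>1 t > 0" "\<pi>2 w > 0" using \<pi>1_nonneg \<pi>2_nonneg
    by (metis less_eq_real_def mult_not_zero zero_less_mult_pos zero_less_mult_pos2)+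
qed

lemma ln\<pi>1_eq: "ln (\<pi>1 s) = Lp (upd i1 w s) - ln (\<pi>2 w)"
  using \<pi>_upd[of w s] \<pi>1_pos[of s] \<pi>2_pos[of w] by (simp add: ln_mult)

lemma Lp_deriv: "(Lp has_derivative frechet_derivative Lp (at x)) (at x)"
  using C1_diff frechet_derivative_works by blast

lemma G_nth: "G x $ i = frechet_derivative Lp (at x) (axis i 1)"
  by (simp add: grad_def)

lemma ln\<pi>1_has_deriv: "((\<lambda>s. ln (\<pi>1 s)) has_real_derivative (G (upd i1 w t) $ i1)) (at t)"
proof -
  let ?D = "frechet_derivative Lp (at (upd i1 w t))"
  have lin: "linear ?D" using Lp_deriv has_derivative_linear by blast
  have d1: "((\<lambda>s. upd i1 w s) has_derivative (\<lambda>s. s *\<^sub>R axis i1 1)) (at t)"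
    by (subst upd_affine) (auto intro!: derivative_eq_intros)
  have "((\<lambda>s. Lp (upd i1 w s)) has_derivative (\<lambda>s. ?D (s *\<^sub>R axis i1 1))) (at t)"
    using diff_chain_at[OF d1 Lp_deriv] by (simp add: o_def)
  then have "((\<lambda>s. Lp (upd i1 w s) - ln (\<pi>2 w)) has_derivative (\<lambda>s. ?D (s *\<^sub>R axis i1 1))) (at t)"
    using has_derivative_diff[OF _ has_derivative_const, of "\<lambda>s. Lp (upd i1 w s)" _ _ "ln (\<pi>2 w)"] by simp
  moreover have "(\<lambda>s. ?D (s *\<^sub>R axis i1 1)) = (*) (G (upd i1 w t) $ i1)"
    using lin by (auto simp: G_nth linear_cmul fun_eq_iff)
  moreover have "(\<lambda>s. Lp (upd i1 w s) - ln (\<pi>2 w)) = (\<lambda>s. ln (\<pi>1 s))"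
    using ln\<pi>1_eq by auto
  ultimately show ?thesis by (simp add: has_field_derivative_def)
qed

lemma h_eq: "h t = G (upd i1 w t) $ i1"
  unfolding h_def using ln\<pi>1_has_deriv DERIV_imp_deriv by blast

lemma h_cont: "continuous_on UNIV h"
proof -
  have "h = (\<lambda>t. G (upd i1 0 t) $ i1)" using h_eq by auto
  moreover have "continuous_on UNIV (\<lambda>t. upd i1 0 t)"
    by (subst upd_affine) (auto intro!: continuous_intros)
  ultimately show ?thesis
    using C1_cont by (auto intro!: continuous_intros continuous_on_compose2[OF C1_cont])
qed

lemma ln\<pi>1_deriv: "((\<lambda>s. ln (\<pi>1 s)) has_real_derivative h t) (at t)"
  using ln\<pi>1_has_deriv h_eq by metis

end


lemma ennreal_unbounded_top:
  fixes x :: ennreal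
  assumes "\<And>n::nat. ennreal (real n) \<le> x"
  shows "x = \<infinity>"
proof (rule ccontr)
  assume "x \<noteq> \<infinity>"
  then obtain r where r: "x = ennreal r" "r \<ge> 0" by (cases x) auto
  have "ennreal (real (nat \<lceil>r\<rceil> + 1)) \<le> ennreal r" using assms[of "nat \<lceil>r\<rceil> + 1"] r(1) by metis
  then have "real (nat \<lceil>r\<rceil> + 1) \<le> r" using ennreal_le_iff[OF r(2)] by blast
  then show False by linarith
qed

lemma emeasure_Ici_inf: "emeasure lborel {a::real..} = \<infinity>"
proof (rule ennreal_unbounded_top)
  fix n :: nat
  have "emeasure lborel {a..a + real n} \<le> emeasure lborel {a..}"
    by (rule emeasure_mono) auto
  then show "ennreal (real n) \<le> emeasure lborel {a..}" by simp
qed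

lemma emeasure_Iic_inf: "emeasure lborel {..a::real} = \<infinity>"
proof (rule ennreal_unbounded_top)
  fix n :: nat
  have "emeasure lborel {a - real n..a} \<le> emeasure lborel {..a}"
    by (rule emeasure_mono) auto
  then show "ennreal (real n) \<le> emeasure lborel {..a}" by simp
qed

lemma exp_plus_ln: assumes "(y::real) > 0" shows "exp (x + ln y) = exp x * y"
proof -
  have "exp (x + ln y) = exp x * exp (ln y)" by (rule exp_add[of x "ln y"])
  moreover have "exp (ln y) = y" using assms by (rule exp_ln)
  ultimately show ?thesis by simp
qed

context mhctx
begin

lemma mvt_ln\<pi>1:
  assumes "a < b"
  shows "\<exists>z. a < z \<and> z < b \<and> ln (\<pi>1 b) - ln (\<pi>1 a) = (b - a) * h z"
  using MVT2[OF assms, of "\<lambda>s. ln (\<pi>1 s)" h] ln\<pi>1_deriv by blast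

lemma tail_consts:
  "\<exists>T c1 c2. T \<ge> 1 \<and> c1 > 0 \<and>
     (\<forall>t. \<bar>t\<bar> \<ge> T \<longrightarrow> c1 * \<bar>t\<bar> powr q \<le> \<bar>h t\<bar> \<and> \<bar>h t\<bar> \<le> c2 * \<bar>t\<bar> powr q)"
proof -
  let ?f = "\<lambda>t::real. ereal (\<bar>deriv (\<lambda>s. ln (\<pi>1 s)) t\<bar> / \<bar>t\<bar> powr q)"
  obtain c1 where c1: "0 < ereal c1" "ereal c1 < Liminf at_infinity ?f"
    using ereal_dense2[OF theta_lo] by blast
  obtain c2 where c2: "Limsup at_infinity ?f < ereal c2"
    using ereal_dense2[OF theta_hi] by blast
  have "eventually (\<lambda>t. ?f t > ereal c1 \<and> ?f t < ereal c2) at_infinity"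
    using less_LiminfD[OF c1(2)] Limsup_lessD[OF c2] by (auto elim: eventually_elim2)
  then obtain b where b: "\<And>t. b \<le> norm t \<Longrightarrow> ?f t > ereal c1 \<and> ?f t < ereal c2"
    unfolding eventually_at_infinity by blast
  define T where "T = max b 1"
  have "\<forall>t. \<bar>t\<bar> \<ge> T \<longrightarrow> c1 * \<bar>t\<bar> powr q \<le> \<bar>h t\<bar> \<and> \<bar>h t\<bar> \<le> c2 * \<bar>t\<bar> powr q"
  proof (intro allI impI)
    fix t :: real assume t: "\<bar>t\<bar> \<ge> T"
    then have bt: "b \<le> norm t" and tp: "\<bar>t\<bar> powr q > 0" by (auto simp: T_def)
    from b[OF bt] have "c1 < \<bar>h t\<bar> / \<bar>t\<bar> powr q" "\<bar>h t\<bar> / \<bar>t\<bar> powr q < c2"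
      by (auto simp: h_def)
    then show "c1 * \<bar>t\<bar> powr q \<le> \<bar>h t\<bar> \<and> \<bar>h t\<bar> \<le> c2 * \<bar>t\<bar> powr q"
      using tp by (auto simp: field_simps)
  qed
  moreover have "T \<ge> 1" "c1 > 0" using c1 by (auto simp: T_def)
  ultimately show ?thesis by blast
qed

definition "T0 = (SOME T. \<exists>c1 c2. T \<ge> 1 \<and> c1 > 0 \<and>
     (\<forall>t. \<bar>t\<bar> \<ge> T \<longrightarrow> c1 * \<bar>t\<bar> powr q \<le> \<bar>h t\<bar> \<and> \<bar>h t\<bar> \<le> c2 * \<bar>t\<bar> powr q))"
definition "c1 = (SOME c1. \<exists>c2. T0 \<ge> 1 \<and> c1 > 0 \<and>
     (\<forall>t. \<bar>t\<bar> \<ge> T0 \<longrightarrow> c1 * \<bar>t\<bar> powr q \<le> \<bar>h t\<bar> \<and> \<bar>h t\<bar> \<le> c2 * \<bar>t\<bar> powr q))"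
definition "c2 = (SOME c2. T0 \<ge> 1 \<and> c1 > 0 \<and>
     (\<forall>t. \<bar>t\<bar> \<ge> T0 \<longrightarrow> c1 * \<bar>t\<bar> powr q \<le> \<bar>h t\<bar> \<and> \<bar>h t\<bar> \<le> c2 * \<bar>t\<bar> powr q))"

lemma tconsts: "T0 \<ge> 1" "c1 > 0"
  "\<And>t. \<bar>t\<bar> \<ge> T0 \<Longrightarrow> c1 * \<bar>t\<bar> powr q \<le> \<bar>h t\<bar>"
  "\<And>t. \<bar>t\<bar> \<ge> T0 \<Longrightarrow> \<bar>h t\<bar> \<le> c2 * \<bar>t\<bar> powr q"
proof -
  have a: "\<exists>c1 c2. T0 \<ge> 1 \<and> c1 > 0 \<and>
     (\<forall>t. \<bar>t\<bar> \<ge> T0 \<longrightarrow> c1 * \<bar>t\<bar> powr q \<le> \<bar>h t\<bar> \<and> \<bar>h t\<bar> \<le> c2 * \<bar>t\<bar> powr q)"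
    unfolding T0_def using someI_ex[OF tail_consts] .
  have b: "\<exists>c2. T0 \<ge> 1 \<and> c1 > 0 \<and>
     (\<forall>t. \<bar>t\<bar> \<ge> T0 \<longrightarrow> c1 * \<bar>t\<bar> powr q \<le> \<bar>h t\<bar> \<and> \<bar>h t\<bar> \<le> c2 * \<bar>t\<bar> powr q)"
    unfolding c1_def using someI_ex[OF a] .
  have c: "T0 \<ge> 1 \<and> c1 > 0 \<and>
     (\<forall>t. \<bar>t\<bar> \<ge> T0 \<longrightarrow> c1 * \<bar>t\<bar> powr q \<le> \<bar>h t\<bar> \<and> \<bar>h t\<bar> \<le> c2 * \<bar>t\<bar> powr q)"
    unfolding c2_def using someI_ex[OF b] .
  then show "T0 \<ge> 1" "c1 > 0"
    "\<And>t. \<bar>t\<bar> \<ge> T0 \<Longrightarrow> c1 * \<bar>t\<bar> powr q \<le> \<bar>h t\<bar>"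
    "\<And>t. \<bar>t\<bar> \<ge> T0 \<Longrightarrow> \<bar>h t\<bar> \<le> c2 * \<bar>t\<bar> powr q" by auto
qed

lemma h_nz: "\<bar>t\<bar> \<ge> T0 \<Longrightarrow> \<bar>h t\<bar> \<ge> c1"
proof -
  assume t: "\<bar>t\<bar> \<ge> T0"
  then have "\<bar>t\<bar> \<ge> 1" using tconsts(1) by linarith
  then have "\<bar>t\<bar> powr q \<ge> 1" using q(1) by (simp add: ge_one_powr_ge_zero)
  then have "c1 * 1 \<le> c1 * \<bar>t\<bar> powr q" using tconsts(2) by (intro mult_left_mono) auto
  then show ?thesis using tconsts(3)[OF t] by simp
qed

lemma h_cont_on: "continuous_on A h"
  using h_cont continuous_on_subset by blast

lemma h_right_neg: "t \<ge> T0 \<Longrightarrow> h t < 0"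
proof (rule ccontr)
  assume t0: "t \<ge> T0" and "\<not> h t < 0"
  moreover have "\<bar>t\<bar> \<ge> T0" using t0 tconsts(1) by arith
  ultimately have ht0: "h t > 0" using h_nz[of t] tconsts(2) by auto
  have allpos: "h s > 0" if s: "s \<ge> T0" for s
  proof (rule ccontr)
    assume "\<not> h s > 0"
    then have "h s \<le> 0" by simp
    then obtain z where z: "min s t \<le> z" "z \<le> max s t" "h z = 0"
    proof (cases "s \<le> t")
      case True
      with IVT'[of h s 0 t] \<open>h s \<le> 0\<close> ht0 h_cont_on show ?thesis using that by force
    next
      case False
      with IVT2'[of h s 0 t] \<open>h s \<le> 0\<close> ht0 h_cont_on show ?thesis using that by force
    qed
    then have "\<bar>z\<bar> \<ge> T0" using s t0 by auto
    then show False using h_nz[of z] z(3) tconsts(2) by auto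
  qed
  have mono: "\<pi>1 s \<ge> \<pi>1 T0" if "s \<ge> T0" for s
  proof (cases "s = T0")
    case False
    then have "T0 < s" using that by simp
    from mvt_ln\<pi>1[OF this] obtain z where "T0 < z" "z < s" "ln (\<pi>1 s) - ln (\<pi>1 T0) = (s - T0) * h z"
      by blast
    moreover have "h z > 0" using allpos \<open>T0 < z\<close> by simp
    moreover have "(s - T0) * h z > 0" using \<open>T0 < s\<close> \<open>h z > 0\<close> by (intro mult_pos_pos) auto
    ultimately have "ln (\<pi>1 s) \<ge> ln (\<pi>1 T0)" by linarith
    then show ?thesis using \<pi>1_pos by simp
  qed simp
  have "(\<integral>\<^sup>+ t. ennreal (\<pi>1 T0) * indicator {T0..} t \<partial>lborel) \<le> (\<integral>\<^sup>+ t. ennreal (\<pi>1 t) \<partial>lborel)"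
    by (intro nn_integral_mono) (auto simp: indicator_def mono ennreal_leI)
  moreover have "(\<integral>\<^sup>+ t. ennreal (\<pi>1 T0) * indicator {T0..} t \<partial>lborel) = \<infinity>"
    using \<pi>1_pos[of T0] by (simp add: nn_integral_cmult_indicator emeasure_Ici_inf ennreal_mult_top)
  ultimately have "\<top> \<le> (\<integral>\<^sup>+ t. ennreal (\<pi>1 t) \<partial>lborel)" by simp
  then have "(\<integral>\<^sup>+ t. ennreal (\<pi>1 t) \<partial>lborel) = \<top>" by (rule top_le)
  then show False using \<pi>1_dens by simp
qed

lemma h_left_pos: "t \<le> - T0 \<Longrightarrow> h t > 0"
proof (rule ccontr)
  assume t0: "t \<le> - T0" and "\<not> h t > 0"
  moreover have "\<bar>t\<bar> \<ge> T0" using t0 tconsts(1) by arith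
  ultimately have ht0: "h t < 0" using h_nz[of t] tconsts(2) by auto
  have allneg: "h s < 0" if s: "s \<le> - T0" for s
  proof (rule ccontr)
    assume "\<not> h s < 0"
    then have "h s \<ge> 0" by simp
    then obtain z where z: "min s t \<le> z" "z \<le> max s t" "h z = 0"
    proof (cases "s \<le> t")
      case True
      with IVT2'[of h t 0 s] \<open>h s \<ge> 0\<close> ht0 h_cont_on show ?thesis using that by force
    next
      case False
      with IVT'[of h t 0 s] \<open>h s \<ge> 0\<close> ht0 h_cont_on show ?thesis using that by force
    qed
    then have "\<bar>z\<bar> \<ge> T0" using s t0 by auto
    then show False using h_nz[of z] z(3) tconsts(2) by auto
  qed
  have mono: "\<pi>1 s \<ge> \<pi>1 (-T0)" if "s \<le> -T0" for s
  proof (cases "s = -T0")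
    case False
    then have "s < -T0" using that by simp
    from mvt_ln\<pi>1[OF this] obtain z where "s < z" "z < -T0" "ln (\<pi>1 (-T0)) - ln (\<pi>1 s) = (-T0 - s) * h z"
      by blast
    moreover have "h z < 0" using allneg \<open>z < -T0\<close> by simp
    moreover have "(-T0 - s) * h z < 0" using \<open>s < -T0\<close> \<open>h z < 0\<close> by (intro mult_pos_neg) auto
    ultimately have "ln (\<pi>1 s) \<ge> ln (\<pi>1 (-T0))" by linarith
    then show ?thesis using \<pi>1_pos by simp
  qed simp
  have "(\<integral>\<^sup>+ t. ennreal (\<pi>1 (-T0)) * indicator {..-T0} t \<partial>lborel) \<le> (\<integral>\<^sup>+ t. ennreal (\<pi>1 t) \<partial>lborel)"
    by (intro nn_integral_mono) (auto simp: indicator_def mono ennreal_leI)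
  moreover have "(\<integral>\<^sup>+ t. ennreal (\<pi>1 (-T0)) * indicator {..-T0} t \<partial>lborel) = \<infinity>"
    using \<pi>1_pos[of "-T0"] by (simp add: nn_integral_cmult_indicator emeasure_Iic_inf ennreal_mult_top)
  ultimately have "\<top> \<le> (\<integral>\<^sup>+ t. ennreal (\<pi>1 t) \<partial>lborel)" by simp
  then have "(\<integral>\<^sup>+ t. ennreal (\<pi>1 t) \<partial>lborel) = \<top>" by (rule top_le)
  then show False using \<pi>1_dens by simp
qed

lemma h_right: "t \<ge> T0 \<Longrightarrow> h t \<le> - c1" using h_right_neg h_nz[of t] tconsts(1) by fastforce
lemma h_left: "t \<le> - T0 \<Longrightarrow> h t \<ge> c1" using h_left_pos h_nz[of t] tconsts(1) by fastforce

lemma ratio_left: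
  assumes "s \<le> s'" "s' \<le> - T0"
  shows "\<pi>1 s \<le> exp (- c1 * (s' - s)) * \<pi>1 s'"
proof (cases "s = s'")
  case False
  then have "s < s'" using assms by simp
  from mvt_ln\<pi>1[OF this] obtain z where z: "s < z" "z < s'" "ln (\<pi>1 s') - ln (\<pi>1 s) = (s' - s) * h z"
    by blast
  have "h z \<ge> c1" using h_left z assms by simp
  then have "(s' - s) * c1 \<le> (s' - s) * h z" using \<open>s < s'\<close> by (intro mult_left_mono) auto
  then have "ln (\<pi>1 s) \<le> - c1 * (s' - s) + ln (\<pi>1 s')" using z by (simp add: algebra_simps)
  then have "exp (ln (\<pi>1 s)) \<le> exp (- c1 * (s' - s) + ln (\<pi>1 s'))" by simp
  then show ?thesis using exp_plus_ln[of "\<pi>1 s'" "- c1 * (s' - s)"] \<pi>1_pos[of s'] \<pi>1_pos[of s] by simp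
qed simp

lemma ratio_right:
  assumes "T0 \<le> s'" "s' \<le> s"
  shows "\<pi>1 s \<le> exp (- c1 * (s - s')) * \<pi>1 s'"
proof (cases "s = s'")
  case False
  then have "s' < s" using assms by simp
  from mvt_ln\<pi>1[OF this] obtain z where z: "s' < z" "z < s" "ln (\<pi>1 s) - ln (\<pi>1 s') = (s - s') * h z"
    by blast
  have "h z \<le> - c1" using h_right z assms by simp
  then have "(s - s') * h z \<le> (s - s') * (- c1)" using \<open>s' < s\<close> by (intro mult_left_mono) auto
  then have "ln (\<pi>1 s) \<le> - c1 * (s - s') + ln (\<pi>1 s')" using z by (simp add: algebra_simps)
  then have "exp (ln (\<pi>1 s)) \<le> exp (- c1 * (s - s') + ln (\<pi>1 s'))" by simp
  then show ?thesis using exp_plus_ln[of "\<pi>1 s'" "- c1 * (s - s')"] \<pi>1_pos[of s'] \<pi>1_pos[of s] by simp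
qed simp

lemma lower_right:
  assumes "T0 \<le> t"
  shows "\<pi>1 t \<ge> \<pi>1 T0 * exp (- c2 * t powr q * t)"
proof (cases "t = T0")
  case True
  have "c2 * T0 powr q * T0 \<ge> 0"
  proof -
    have "\<bar>h T0\<bar> \<le> c2 * \<bar>T0\<bar> powr q" using tconsts(4)[of T0] tconsts(1) by simp
    moreover have "\<bar>T0\<bar> = T0" using tconsts(1) by simp
    ultimately have "c2 * T0 powr q \<ge> 0" using abs_ge_zero[of "h T0"] by linarith
    then show ?thesis using tconsts(1) by simp
  qed
  then show ?thesis using True \<pi>1_pos[of T0] by (simp add: mult_le_cancel_left1)
next
  case False
  then have "T0 < t" using assms by simp
  from mvt_ln\<pi>1[OF this] obtain z where z: "T0 < z" "z < t" "ln (\<pi>1 t) - ln (\<pi>1 T0) = (t - T0) * h z"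
    by blast
  have "\<bar>h z\<bar> \<le> c2 * z powr q" using tconsts(4)[of z] z tconsts(1) by simp
  also have "\<dots> \<le> c2 * t powr q"
  proof -
    have "0 \<le> c2 * z powr q" using \<open>\<bar>h z\<bar> \<le> c2 * z powr q\<close> abs_ge_zero[of "h z"] by linarith
    moreover have "z powr q > 0" using z tconsts(1) by simp
    ultimately have "c2 \<ge> 0" by (simp add: zero_le_mult_iff)
    moreover have "z powr q \<le> t powr q" using z tconsts(1) q(1) by (intro powr_mono2) auto
    ultimately show ?thesis by (intro mult_left_mono)
  qed
  finally have hz: "h z \<ge> - (c2 * t powr q)" by simp
  have "(t - T0) * (- (c2 * t powr q)) \<le> (t - T0) * h z" using hz z by (intro mult_left_mono) auto
  moreover have "(t - T0) * (- (c2 * t powr q)) \<ge> t * (- (c2 * t powr q))"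
  proof -
    have "c2 * t powr q \<ge> 0" using hz h_right[of z] z tconsts(2) by linarith
    then show ?thesis using tconsts(1) by (intro mult_right_mono_neg) auto
  qed
  ultimately have "ln (\<pi>1 t) \<ge> ln (\<pi>1 T0) + (- c2 * t powr q * t)" using z by (simp add: algebra_simps)
  then have "exp (ln (\<pi>1 t)) \<ge> exp (- c2 * t powr q * t + ln (\<pi>1 T0))" by (simp add: add.commute)
  then show ?thesis using exp_plus_ln[of "\<pi>1 T0" "- c2 * t powr q * t"] \<pi>1_pos[of t] \<pi>1_pos[of T0] by (simp add: mult.commute)
qed

end


context mhctx
begin

definition "Sc l x = upd i1 x (x $ i1 / l)"

lemma Sc_nth: "Sc l x $ i = (if i = i1 then x $ i / l else x $ i)"
  by (simp add: Sc_def upd_nth)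

lemma Sc_eq: "(\<chi> i. if i = i1 then x $ i / l else x $ i) = Sc l x"
  by (simp add: vec_eq_iff Sc_nth)

lemma pl_def': "pi_scaled i1 l \<pi> x = \<pi> (Sc l x) / l"
  by (simp add: pi_scaled_def Sc_eq)

lemma pl_eq: "pi_scaled i1 l \<pi> x = \<pi>1 (x $ i1 / l) * \<pi>2 x / l"
  by (simp add: pl_def' Sc_def \<pi>_upd)

lemma pl_pos: "l > 0 \<Longrightarrow> pi_scaled i1 l \<pi> x > 0"
  using pos by (simp add: pl_def')

lemma Sc_linear: "bounded_linear (Sc l)"
proof -
  have "linear (Sc l)"
    by (rule linearI) (auto simp: vec_eq_iff Sc_nth add_divide_distrib)
  then show ?thesis by (simp add: linear_conv_bounded_linear)
qed

lemma Sc_cont: "continuous_on UNIV (Sc l)"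
  using Sc_linear linear_continuous_on by blast

lemma \<pi>_cont: "continuous_on UNIV \<pi>"
proof -
  have "continuous_on UNIV Lp"
    using C1_diff differentiable_imp_continuous_on differentiable_on_def
    by (metis differentiable_at_withinI)
  then have "continuous_on UNIV (\<lambda>z. exp (Lp z))" by (rule continuous_on_exp)
  moreover have "(\<lambda>z. exp (Lp z)) = \<pi>" using pos by auto
  ultimately show ?thesis by metis
qed

lemma pl_meas: "pi_scaled i1 l \<pi> \<in> borel_measurable lborel"
proof -
  have "Sc l \<in> borel_measurable borel" using Sc_cont borel_measurable_continuous_onI by blast
  then have "(\<lambda>x. \<pi> (Sc l x) / l) \<in> borel_measurable borel"
    using meas by measurable
  then show ?thesis by (simp add: pl_def' [abs_def])
qed

lemma grad_pl:
  assumes l: "l > 0"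
  shows "grad (\<lambda>z. ln (pi_scaled i1 l \<pi> z)) x = (\<chi> i. (if i = i1 then 1 / l else 1) * G (Sc l x) $ i)"
proof -
  let ?D = "frechet_derivative Lp (at (Sc l x))"
  have lin: "linear ?D" using Lp_deriv has_derivative_linear by blast
  have dS: "(Sc l has_derivative Sc l) (at x)"
    using Sc_linear bounded_linear_imp_has_derivative by blast
  have "((Lp \<circ> Sc l) has_derivative (?D \<circ> Sc l)) (at x)"
    using diff_chain_at[OF dS Lp_deriv] .
  then have "((\<lambda>z. Lp (Sc l z) - ln l) has_derivative (\<lambda>v. ?D (Sc l v))) (at x)"
    using has_derivative_diff[OF _ has_derivative_const, of "Lp \<circ> Sc l" _ _ "ln l"] by (simp add: o_def)
  moreover have "(\<lambda>z. Lp (Sc l z) - ln l) = (\<lambda>z. ln (pi_scaled i1 l \<pi> z))"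
  proof (rule ext)
    fix z
    have "\<pi> (Sc l z) \<noteq> 0" "l \<noteq> 0" using pos l by (simp_all add: less_imp_neq[symmetric])
    then show "Lp (Sc l z) - ln l = ln (pi_scaled i1 l \<pi> z)"
      by (simp add: pl_def' ln_div)
  qed
  ultimately have "((\<lambda>z. ln (pi_scaled i1 l \<pi> z)) has_derivative (\<lambda>v. ?D (Sc l v))) (at x)" by simp
  then have fd: "frechet_derivative (\<lambda>z. ln (pi_scaled i1 l \<pi> z)) (at x) = (\<lambda>v. ?D (Sc l v))"
    using frechet_derivative_at by metis
  have sc_ax: "Sc l (axis i 1) = (if i = i1 then 1 / l else 1) *\<^sub>R axis i 1" for i
    by (auto simp: vec_eq_iff Sc_nth axis_def)
  show ?thesis
    unfolding grad_def fd sc_ax using lin by (simp add: vec_eq_iff linear_cmul G_nth)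
qed

lemma grad_pl_i1:
  assumes l: "l > 0"
  shows "grad (\<lambda>z. ln (pi_scaled i1 l \<pi> z)) x $ i1 = h (x $ i1 / l) / l"
  using h_eq[of "x $ i1 / l" x] by (simp add: grad_pl[OF l] Sc_def)

lemma grad_pl_cont:
  assumes l: "l > 0"
  shows "continuous_on UNIV (grad (\<lambda>z. ln (pi_scaled i1 l \<pi> z)))"
proof -
  have "continuous_on UNIV (\<lambda>x. G (Sc l x))"
    using continuous_on_compose2[OF C1_cont Sc_cont] by auto
  then have "continuous_on UNIV (\<lambda>x. (\<chi> i. (if i = i1 then 1 / l else 1) * G (Sc l x) $ i))"
    by (intro continuous_intros) auto
  then show ?thesis using grad_pl[OF l] by (simp add: fun_eq_iff[symmetric])
qed

end


lemma shift_inv: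
  fixes g :: "'a::euclidean_space \<Rightarrow> ennreal"
  assumes g: "g \<in> borel_measurable borel"
  shows "(\<integral>\<^sup>+ y. g (y + a) \<partial>lborel) = (\<integral>\<^sup>+ y. g y \<partial>lborel)"
proof -
  have "(\<integral>\<^sup>+ y. g y \<partial>lborel) = (\<integral>\<^sup>+ y. g y \<partial>(distr lborel borel ((+) a)))"
    by (simp add: lborel_distr_plus)
  also have "\<dots> = (\<integral>\<^sup>+ y. g (a + y) \<partial>lborel)"
    using g by (subst nn_integral_distr) auto
  finally show ?thesis by (simp add: add.commute)
qed

lemma normal_nn_integral:
  assumes "s > 0"
  shows "(\<integral>\<^sup>+ x. ennreal (normal_density \<mu> s x) \<partial>lborel) = 1"
  using integral_normal_density[OF assms] integrable_normal_density[OF assms]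
  by (subst nn_integral_eq_integral) auto

lemma norm_sq_basis: "(norm (v::'a::euclidean_space))\<^sup>2 = (\<Sum>b\<in>Basis. (v \<bullet> b)\<^sup>2)"
  unfolding power2_norm_eq_inner euclidean_inner[of v v] by (simp add: power2_eq_square)

lemma powr_half_pow:
  assumes "a > 0"
  shows "a powr (- real d / 2) = (1 / sqrt a) ^ d"
proof -
  have e1: "a powr (- (1/2)) = inverse (a powr (1/2))" by (rule powr_minus)
  have e2: "a powr (1/2) = sqrt a" using assms by (simp add: powr_half_sqrt)
  have "(1 / sqrt a) ^ d = (a powr (- (1/2))) ^ d"
    using e1 e2 by (simp add: inverse_eq_divide)
  also have "\<dots> = (a powr (- (1/2))) powr (real d)"
    using assms by (simp add: powr_realpow)
  also have "\<dots> = a powr (- (1/2) * real d)"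
    by (simp add: powr_powr)
  finally show ?thesis by simp
qed

lemma gauss_prod:
  assumes s: "s > 0"
  shows "gauss_dens s m (y::real^'n) = (\<Prod>b\<in>Basis. normal_density (m \<bullet> b) s (y \<bullet> b))"
proof -
  have "(\<Prod>b\<in>Basis. normal_density (m \<bullet> b) s (y \<bullet> b))
      = (\<Prod>b\<in>(Basis::(real^'n) set). 1 / sqrt (2 * pi * s\<^sup>2)) * (\<Prod>b\<in>(Basis::(real^'n) set). exp (- ((y - m) \<bullet> b)\<^sup>2 / (2 * s\<^sup>2)))"
    by (simp only: prod.distrib[symmetric]) (rule prod.cong, simp_all add: normal_density_def inner_diff_left)
  also have "(\<Prod>b\<in>(Basis::(real^'n) set). exp (- ((y - m) \<bullet> b)\<^sup>2 / (2 * s\<^sup>2)))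
       = exp (\<Sum>b\<in>(Basis::(real^'n) set). - ((y - m) \<bullet> b)\<^sup>2 / (2 * s\<^sup>2))"
    by (simp add: exp_sum)
  also have "(\<Sum>b\<in>(Basis::(real^'n) set). - ((y - m) \<bullet> b)\<^sup>2 / (2 * s\<^sup>2)) = - (norm (y - m))\<^sup>2 / (2 * s\<^sup>2)"
    by (simp add: norm_sq_basis[of "y - m"] sum_divide_distrib[symmetric] sum_negf)
  also have "(\<Prod>b\<in>(Basis::(real^'n) set). 1 / sqrt (2 * pi * s\<^sup>2)) = (2 * pi * s\<^sup>2) powr (- real CARD('n) / 2)"
  proof -
    have "2 * pi * s\<^sup>2 > 0" using s by simp
    from powr_half_pow[OF this, of "CARD('n)"] show ?thesis by simp
  qed
  finally show ?thesis by (simp add: gauss_dens_def)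
qed

lemma gauss_total:
  assumes s: "s > 0"
  shows "(\<integral>\<^sup>+ y. ennreal (gauss_dens s m (y::real^'n)) \<partial>lborel) = 1"
proof -
  have "(\<integral>\<^sup>+ y. ennreal (gauss_dens s m (y::real^'n)) \<partial>lborel)
      = (\<integral>\<^sup>+ y. (\<Prod>b\<in>Basis. ennreal (normal_density (m \<bullet> b) s (y \<bullet> b))) \<partial>lborel)"
    using s by (simp add: gauss_prod prod_ennreal)
  also have "\<dots> = (\<Prod>b\<in>(Basis::(real^'n) set). (\<integral>\<^sup>+ x. ennreal (normal_density (m \<bullet> b) s x) \<partial>lborel))"
    by (rule nn_integral_lborel_prod) auto
  also have "\<dots> = 1" using normal_nn_integral[OF s] by simp
  finally show ?thesis .
qed

lemma gauss_le: "s > 0 \<Longrightarrow> gauss_dens s m y \<le> (2 * pi * s\<^sup>2) powr (- real CARD('n) / 2)"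
  for y :: "real^'n"
  by (simp add: gauss_dens_def mult_le_cancel_left1)

lemma gauss_nonneg: "gauss_dens s m y \<ge> 0"
  by (simp add: gauss_dens_def)

lemma gauss_pos: "s > 0 \<Longrightarrow> gauss_dens s m y > 0"
  by (simp add: gauss_dens_def)

lemma gauss_far:
  assumes s: "s > 0" and r: "0 \<le> r" "r \<le> norm (y - m)"
  shows "gauss_dens s m (y::real^'n) \<le> exp (- r\<^sup>2 / (4 * s\<^sup>2)) * 2 powr (real CARD('n) / 2) * gauss_dens (sqrt 2 * s) m y"
proof -
  let ?R = "norm (y - m)"
  have "exp (- ?R\<^sup>2 / (2 * s\<^sup>2)) = exp (- ?R\<^sup>2 / (4 * s\<^sup>2)) * exp (- ?R\<^sup>2 / (4 * s\<^sup>2))"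
    by (simp add: exp_add[symmetric])
  also have "\<dots> \<le> exp (- r\<^sup>2 / (4 * s\<^sup>2)) * exp (- ?R\<^sup>2 / (4 * s\<^sup>2))"
    using r s by (intro mult_right_mono) (auto intro!: divide_right_mono power_mono)
  finally have e: "exp (- ?R\<^sup>2 / (2 * s\<^sup>2)) \<le> exp (- r\<^sup>2 / (4 * s\<^sup>2)) * exp (- ?R\<^sup>2 / (4 * s\<^sup>2))" .
  have c: "(2 * pi * (sqrt 2 * s)\<^sup>2) powr (- real CARD('n) / 2) = 2 powr (- real CARD('n) / 2) * (2 * pi * s\<^sup>2) powr (- real CARD('n) / 2)"
  proof -
    have "2 * pi * (sqrt 2 * s)\<^sup>2 = 2 * (2 * pi * s\<^sup>2)" by (simp add: power_mult_distrib)
    then show ?thesis by (simp only: powr_mult)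
  qed
  have "gauss_dens s m y = (2 * pi * s\<^sup>2) powr (- real CARD('n) / 2) * exp (- ?R\<^sup>2 / (2 * s\<^sup>2))"
    by (simp add: gauss_dens_def)
  also have "\<dots> \<le> (2 * pi * s\<^sup>2) powr (- real CARD('n) / 2) * (exp (- r\<^sup>2 / (4 * s\<^sup>2)) * exp (- ?R\<^sup>2 / (4 * s\<^sup>2)))"
    using e by (intro mult_left_mono) auto
  also have "\<dots> = exp (- r\<^sup>2 / (4 * s\<^sup>2)) * 2 powr (real CARD('n) / 2) * gauss_dens (sqrt 2 * s) m y"
  proof -
    have p: "2 powr (real CARD('n) / 2) * 2 powr (- real CARD('n) / 2) = 1"
      by (simp add: powr_add[symmetric])
    have q2: "2 * (sqrt 2 * s)\<^sup>2 = 4 * s\<^sup>2" by (simp add: power_mult_distrib)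
    have "exp (- r\<^sup>2 / (4 * s\<^sup>2)) * 2 powr (real CARD('n) / 2) * gauss_dens (sqrt 2 * s) m y
      = exp (- r\<^sup>2 / (4 * s\<^sup>2)) * (2 powr (real CARD('n) / 2) * 2 powr (- real CARD('n) / 2)) * (2 * pi * s\<^sup>2) powr (- real CARD('n) / 2) * exp (- ?R\<^sup>2 / (4 * s\<^sup>2))"
      unfolding gauss_dens_def c q2 by (simp only: mult_ac)
    also have "\<dots> = (2 * pi * s\<^sup>2) powr (- real CARD('n) / 2) * (exp (- r\<^sup>2 / (4 * s\<^sup>2)) * exp (- ?R\<^sup>2 / (4 * s\<^sup>2)))"
      unfolding p by (simp only: mult_ac mult_1_left mult_1_right)
    finally show ?thesis by simp
  qed
  finally show ?thesis .
qed



lemma L2_member: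
  fixes p :: "'a::euclidean_space \<Rightarrow> real"
  assumes ppos: "\<forall>x. p x > 0" and pm: "p \<in> borel_measurable lborel"
    and pint: "(\<integral>\<^sup>+x. ennreal (p x) \<partial>lborel) = 1"
    and B: "B \<in> sets borel" and P: "P = (\<integral>x. p x * indicator B x \<partial>lborel)"
    and P0: "0 < P" "P < 1"
  shows "(\<lambda>x. (indicator B x - P) / sqrt (P * (1 - P))) \<in> L2_01 p"
proof -
  define s where "s = sqrt (P * (1 - P))"
  have s2: "s\<^sup>2 = P * (1 - P)" using P0 by (simp add: s_def)
  have spos: "s > 0" using P0 by (simp add: s_def)
  have ip: "integrable lborel p"
    using pm ppos pint by (intro integrableI_nonneg) (auto simp: less_imp_le top_unique)
  have Ip: "(\<integral>x. p x \<partial>lborel) = 1"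
    using integral_eq_nn_integral[of p lborel] pm ppos pint by (simp add: less_imp_le)
  have Bl: "B \<in> sets lborel" using B by simp
  have ipB: "integrable lborel (\<lambda>x. p x * indicator B x)"
    using integrable_real_mult_indicator[OF Bl ip] .
  let ?f = "\<lambda>x. (indicator B x - P) / s"
  have e1: "(\<lambda>x. p x * ?f x) = (\<lambda>x. (p x * indicator B x - P * p x) / s)"
    by (auto simp: fun_eq_iff field_simps)
  have i1: "integrable lborel (\<lambda>x. (p x * indicator B x - P * p x) / s)"
    using ipB ip by (intro integrable_divide_zero integrable_diff integrable_mult_right) auto
  have I1: "(\<integral>x. (p x * indicator B x - P * p x) / s \<partial>lborel) = 0"
    using ipB ip Ip P by (simp add: integral_diff)
  have e2: "(\<lambda>x. p x * (?f x)\<^sup>2) = (\<lambda>x. ((1 - 2 * P) * (p x * indicator B x) + P\<^sup>2 * p x) / s\<^sup>2)"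
  proof
    fix x
    have "(indicator B x - P)\<^sup>2 = (1 - 2 * P) * indicator B x + P\<^sup>2"
      by (cases "x \<in> B") (auto simp: power2_eq_square algebra_simps)
    then have "p x * (indicator B x - P)\<^sup>2 = p x * ((1 - 2 * P) * indicator B x + P\<^sup>2)"
      by simp
    also have "\<dots> = (1 - 2 * P) * (p x * indicator B x) + P\<^sup>2 * p x"
      by (simp add: algebra_simps)
    finally have "p x * (indicator B x - P)\<^sup>2 = (1 - 2 * P) * (p x * indicator B x) + P\<^sup>2 * p x" .
    then show "p x * (?f x)\<^sup>2 = ((1 - 2 * P) * (p x * indicator B x) + P\<^sup>2 * p x) / s\<^sup>2"
      by (simp add: power_divide)
  qed
  have i2: "integrable lborel (\<lambda>x. ((1 - 2 * P) * (p x * indicator B x) + P\<^sup>2 * p x) / s\<^sup>2)"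
    using ipB ip by (intro integrable_divide_zero integrable_add integrable_mult_right) auto
  have I2: "(\<integral>x. ((1 - 2 * P) * (p x * indicator B x) + P\<^sup>2 * p x) / s\<^sup>2 \<partial>lborel) = 1"
  proof -
    have "(\<integral>x. ((1 - 2 * P) * (p x * indicator B x) + P\<^sup>2 * p x) / s\<^sup>2 \<partial>lborel)
        = ((1 - 2 * P) * P + P\<^sup>2) / s\<^sup>2"
      using ipB ip Ip P by (simp add: integral_add)
    also have "\<dots> = 1" using s2 P0 spos by (simp add: power2_eq_square field_simps)
    finally show ?thesis .
  qed
  have fm: "?f \<in> borel_measurable lborel" using B by measurable
  have a2: "integrable lborel (\<lambda>x. p x * ?f x)" unfolding e1 by (rule i1)
  have a3: "integrable lborel (\<lambda>x. p x * (?f x)\<^sup>2)" unfolding e2 by (rule i2)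
  have a4: "(\<integral>x. p x * ?f x \<partial>lborel) = 0" unfolding e1 by (rule I1)
  have a5: "(\<integral>x. p x * (?f x - (\<integral>z. p z * ?f z \<partial>lborel))\<^sup>2 \<partial>lborel) = 1"
    unfolding a4 diff_zero e2 by (rule I2)
  show ?thesis
    unfolding L2_01_def s_def[symmetric]
    using fm a2 a3 a4 a5 by blast
qed



lemma min_mult_aux: "(a::real) > 0 \<Longrightarrow> a * min 1 (b / a) = min a b"
  by (simp add: min_def field_simps)

lemma gap_le:
  fixes p :: "'a::euclidean_space \<Rightarrow> real" and qq :: "'a \<Rightarrow> 'a \<Rightarrow> real"
  assumes ppos: "\<forall>x. p x > 0" and pm: "p \<in> borel_measurable lborel"
    and pint: "(\<integral>\<^sup>+x. ennreal (p x) \<partial>lborel) = 1"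
    and qpos: "\<forall>x y. qq x y > 0"
    and qcont: "continuous_on UNIV (\<lambda>z. qq (fst z) (snd z))"
    and B: "B \<in> sets borel" and P: "P = (\<integral>x. p x * indicator B x \<partial>lborel)"
    and P0: "0 < P" "P \<le> 1/2"
    and A0: "A \<ge> 0"
    and AB: "\<forall>x\<in>B. (\<integral>\<^sup>+y. ennreal (min (p x * qq x y) (p y * qq y x)) \<partial>lborel) \<le> ennreal (p x * A)"
  shows "mh_gap p qq \<le> ennreal (2 * A)"
proof -
  have PSF: "pair_sigma_finite (lborel::'a measure) (lborel::'a measure)"
    by (simp add: pair_sigma_finite_def sigma_finite_lborel)
  define s where "s = sqrt (P * (1 - P))"
  have s2: "s\<^sup>2 = P * (1 - P)" using P0 by (simp add: s_def)
  have spos: "s > 0" using P0 by (simp add: s_def)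
  define f where "f x = (indicator B x - P) / s" for x
  have fL: "f \<in> L2_01 p"
    unfolding f_def[abs_def] s_def using P0 by (intro L2_member[OF ppos pm pint B P]) auto
  define M where "M x y = min (p x * qq x y) (p y * qq y x)" for x y
  have Msym: "M x y = M y x" for x y by (simp add: M_def min.commute)
  have Mnn: "M x y \<ge> 0" for x y using ppos qpos by (simp add: M_def less_imp_le)
  have pa: "p x * (mh_accept p qq x y * qq x y) = M x y" for x y
  proof -
    have "p x * qq x y > 0" using ppos qpos by simp
    then have "p x * qq x y * min 1 (p y * qq y x / (p x * qq x y)) = M x y"
      unfolding M_def by (rule min_mult_aux)
    then show ?thesis by (simp add: mh_accept_def mult_ac)
  qed
  have sp: "sets (lborel \<Otimes>\<^sub>M lborel) = sets (borel :: ('a \<times> 'a) measure)"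
    by (metis borel_prod sets_lborel sets_pair_measure_cong)
  have Qm[measurable]: "(\<lambda>z. qq (fst z) (snd z)) \<in> borel_measurable (lborel \<Otimes>\<^sub>M lborel)"
    using borel_measurable_continuous_onI[OF qcont] measurable_cong_sets[OF sp refl] by blast
  have qcont': "continuous_on UNIV (\<lambda>z. qq (snd z) (fst z))"
  proof -
    have "continuous_on UNIV (\<lambda>z::'a\<times>'a. (snd z, fst z))" by (intro continuous_intros)
    from continuous_on_compose2[OF qcont this] show ?thesis by simp
  qed
  have Qm'[measurable]: "(\<lambda>z. qq (snd z) (fst z)) \<in> borel_measurable (lborel \<Otimes>\<^sub>M lborel)"
    using borel_measurable_continuous_onI[OF qcont'] measurable_cong_sets[OF sp refl] by blast
  have qsec1[measurable]: "(\<lambda>y. qq x y) \<in> borel_measurable lborel" for x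
  proof -
    have "continuous_on UNIV (\<lambda>y. qq x y)"
    proof -
      have "continuous_on UNIV (\<lambda>y::'a. (x, y))" by (intro continuous_intros)
      from continuous_on_compose2[OF qcont this] show ?thesis by simp
    qed
    then show ?thesis using borel_measurable_continuous_onI by simp
  qed
  have qsec2[measurable]: "(\<lambda>y. qq y x) \<in> borel_measurable lborel" for x
  proof -
    have "continuous_on UNIV (\<lambda>y. qq y x)"
    proof -
      have "continuous_on UNIV (\<lambda>y::'a. (y, x))" by (intro continuous_intros)
      from continuous_on_compose2[OF qcont this] show ?thesis by simp
    qed
    then show ?thesis using borel_measurable_continuous_onI by simp
  qed
  have pm'[measurable]: "p \<in> borel_measurable lborel" by (rule pm)
  have Bl[measurable]: "B \<in> sets lborel" using B by simp
  have Mm1[measurable]: "(\<lambda>z. ennreal (M (fst z) (snd z) * indicator B (fst z))) \<in> borel_measurable (lborel \<Otimes>\<^sub>M lborel)"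
    unfolding M_def by measurable
  have Mm2[measurable]: "(\<lambda>z. ennreal (M (fst z) (snd z) * indicator B (snd z))) \<in> borel_measurable (lborel \<Otimes>\<^sub>M lborel)"
    unfolding M_def by measurable
  have Ms1[measurable]: "(\<lambda>y. ennreal (M x y * indicator B x)) \<in> borel_measurable lborel" for x
    unfolding M_def by measurable
  have Ms2[measurable]: "(\<lambda>y. ennreal (M x y * indicator B y)) \<in> borel_measurable lborel" for x
    unfolding M_def by measurable
  have am[measurable]: "(\<lambda>y. ennreal (mh_accept p qq x y * qq x y * (f y - f x)\<^sup>2)) \<in> borel_measurable lborel" for x
    unfolding mh_accept_def f_def by measurable
  have I1m[measurable]: "(\<lambda>x. \<integral>\<^sup>+y. ennreal (M x y * indicator B x) \<partial>lborel) \<in> borel_measurable lborel"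
    using sigma_finite_measure.borel_measurable_nn_integral[OF sigma_finite_lborel, of "\<lambda>x y. ennreal (M x y * indicator B x)" lborel] Mm1
    by (simp add: case_prod_beta')
  have I2m[measurable]: "(\<lambda>x. \<integral>\<^sup>+y. ennreal (M x y * indicator B y) \<partial>lborel) \<in> borel_measurable lborel"
    using sigma_finite_measure.borel_measurable_nn_integral[OF sigma_finite_lborel, of "\<lambda>x y. ennreal (M x y * indicator B y)" lborel] Mm2
    by (simp add: case_prod_beta')
  define c where "c = ennreal (1 / s\<^sup>2)"
  have kern: "ennreal (p x) * mh_kernel_int p qq x (\<lambda>y. (f y - f x)\<^sup>2)
      \<le> c * ((\<integral>\<^sup>+y. ennreal (M x y * indicator B x) \<partial>lborel) + (\<integral>\<^sup>+y. ennreal (M x y * indicator B y) \<partial>lborel))" for x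
  proof -
    have "ennreal (p x) * mh_kernel_int p qq x (\<lambda>y. (f y - f x)\<^sup>2)
        = ennreal (p x) * (\<integral>\<^sup>+y. ennreal (mh_accept p qq x y * qq x y * (f y - f x)\<^sup>2) \<partial>lborel)"
      by (simp add: mh_kernel_int_def)
    also have "\<dots> = (\<integral>\<^sup>+y. ennreal (p x) * ennreal (mh_accept p qq x y * qq x y * (f y - f x)\<^sup>2) \<partial>lborel)"
      by (rule nn_integral_cmult[symmetric]) measurable
    also have "\<dots> \<le> (\<integral>\<^sup>+y. c * (ennreal (M x y * indicator B x) + ennreal (M x y * indicator B y)) \<partial>lborel)"
    proof (rule nn_integral_mono)
      fix y
      have "ennreal (p x) * ennreal (mh_accept p qq x y * qq x y * (f y - f x)\<^sup>2)
          = ennreal (M x y * (f y - f x)\<^sup>2)"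
      proof -
        have "ennreal (p x) * ennreal (mh_accept p qq x y * qq x y * (f y - f x)\<^sup>2)
            = ennreal (p x * (mh_accept p qq x y * qq x y * (f y - f x)\<^sup>2))"
          using ppos by (intro ennreal_mult'[symmetric]) (simp add: less_imp_le)
        also have "p x * (mh_accept p qq x y * qq x y * (f y - f x)\<^sup>2) = (p x * (mh_accept p qq x y * qq x y)) * (f y - f x)\<^sup>2"
          by (simp only: mult.assoc)
        finally show ?thesis using pa[of x y] by simp
      qed
      also have "\<dots> \<le> ennreal (1 / s\<^sup>2 * (M x y * indicator B x + M x y * indicator B y))"
      proof (rule ennreal_leI)
        have "(f y - f x)\<^sup>2 = (indicator B y - indicator B x)\<^sup>2 / s\<^sup>2"
        proof -
          have "f y - f x = (indicator B y - indicator B x) / s" by (simp add: f_def diff_divide_distrib)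
          then show ?thesis by (simp add: power_divide)
        qed
        moreover have "(indicator B y - indicator B x)\<^sup>2 \<le> (indicator B x + indicator B y :: real)"
          by (cases "x \<in> B"; cases "y \<in> B") auto
        ultimately have "(f y - f x)\<^sup>2 \<le> (indicator B x + indicator B y) / s\<^sup>2"
          using spos by (simp add: divide_right_mono)
        then have "M x y * (f y - f x)\<^sup>2 \<le> M x y * ((indicator B x + indicator B y) / s\<^sup>2)"
          using Mnn[of x y] by (intro mult_left_mono)
        then show "M x y * (f y - f x)\<^sup>2 \<le> 1 / s\<^sup>2 * (M x y * indicator B x + M x y * indicator B y)"
          by (simp add: algebra_simps add_divide_distrib)
      qed
      also have "\<dots> = c * (ennreal (M x y * indicator B x) + ennreal (M x y * indicator B y))"
      proof -
        have u: "M x y * indicator B x \<ge> 0" "M x y * indicator B y \<ge> 0" using Mnn[of x y] by auto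
        have "ennreal (1 / s\<^sup>2 * (M x y * indicator B x + M x y * indicator B y))
            = ennreal (1 / s\<^sup>2) * ennreal (M x y * indicator B x + M x y * indicator B y)"
          by (rule ennreal_mult) (use u in auto)
        also have "ennreal (M x y * indicator B x + M x y * indicator B y) = ennreal (M x y * indicator B x) + ennreal (M x y * indicator B y)"
          by (rule ennreal_plus) (use u in auto)
        finally show ?thesis unfolding c_def .
      qed
      finally show "ennreal (p x) * ennreal (mh_accept p qq x y * qq x y * (f y - f x)\<^sup>2)
          \<le> c * (ennreal (M x y * indicator B x) + ennreal (M x y * indicator B y))" .
    qed
    also have "\<dots> = c * ((\<integral>\<^sup>+y. ennreal (M x y * indicator B x) \<partial>lborel) + (\<integral>\<^sup>+y. ennreal (M x y * indicator B y) \<partial>lborel))"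
      by (simp add: nn_integral_cmult nn_integral_add)
    finally show ?thesis .
  qed
  have ip: "integrable lborel p"
    using pm ppos pint by (intro integrableI_nonneg) (auto simp: less_imp_le top_unique)
  have ipB: "integrable lborel (\<lambda>x. p x * indicator B x)"
    using integrable_real_mult_indicator[OF Bl ip] .
  have T1: "(\<integral>\<^sup>+x. (\<integral>\<^sup>+y. ennreal (M x y * indicator B x) \<partial>lborel) \<partial>lborel) \<le> ennreal (A * P)"
  proof -
    have "(\<integral>\<^sup>+x. (\<integral>\<^sup>+y. ennreal (M x y * indicator B x) \<partial>lborel) \<partial>lborel)
        \<le> (\<integral>\<^sup>+x. ennreal (A * (p x * indicator B x)) \<partial>lborel)"
    proof (rule nn_integral_mono)
      fix x
      show "(\<integral>\<^sup>+y. ennreal (M x y * indicator B x) \<partial>lborel) \<le> ennreal (A * (p x * indicator B x))"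
      proof (cases "x \<in> B")
        case True
        then show ?thesis using AB by (simp add: M_def mult.commute)
      next
        case False
        then show ?thesis by simp
      qed
    qed
    also have "\<dots> = ennreal (\<integral>x. A * (p x * indicator B x) \<partial>lborel)"
      using ipB A0 ppos by (intro nn_integral_eq_integral) (auto intro!: integrable_mult_right simp: less_imp_le)
    also have "\<dots> = ennreal (A * P)" using P by simp
    finally show ?thesis .
  qed
  have T2: "(\<integral>\<^sup>+x. (\<integral>\<^sup>+y. ennreal (M x y * indicator B y) \<partial>lborel) \<partial>lborel)
      = (\<integral>\<^sup>+x. (\<integral>\<^sup>+y. ennreal (M x y * indicator B x) \<partial>lborel) \<partial>lborel)"
  proof -
    have "(\<integral>\<^sup>+x. (\<integral>\<^sup>+y. ennreal (M x y * indicator B y) \<partial>lborel) \<partial>lborel)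
        = (\<integral>\<^sup>+y. (\<integral>\<^sup>+x. ennreal (M x y * indicator B y) \<partial>lborel) \<partial>lborel)"
      using pair_sigma_finite.Fubini'[OF PSF, of "\<lambda>x y. ennreal (M x y * indicator B y)"] Mm2
      by (simp add: case_prod_beta')
    also have "\<dots> = (\<integral>\<^sup>+y. (\<integral>\<^sup>+x. ennreal (M y x * indicator B y) \<partial>lborel) \<partial>lborel)"
      using Msym by simp
    finally show ?thesis .
  qed
  have "mh_gap p qq \<le> ennreal (1/2) * (\<integral>\<^sup>+ x. ennreal (p x) * mh_kernel_int p qq x (\<lambda>y. (f y - f x)\<^sup>2) \<partial>lborel)"
    unfolding mh_gap_def using fL by (rule INF_lower)
  also have "\<dots> \<le> ennreal (1/2) * (\<integral>\<^sup>+ x. c * ((\<integral>\<^sup>+y. ennreal (M x y * indicator B x) \<partial>lborel) + (\<integral>\<^sup>+y. ennreal (M x y * indicator B y) \<partial>lborel)) \<partial>lborel)"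
    by (intro mult_left_mono nn_integral_mono kern) auto
  also have "\<dots> = ennreal (1/2) * (c * ((\<integral>\<^sup>+x. (\<integral>\<^sup>+y. ennreal (M x y * indicator B x) \<partial>lborel) \<partial>lborel)
        + (\<integral>\<^sup>+x. (\<integral>\<^sup>+y. ennreal (M x y * indicator B y) \<partial>lborel) \<partial>lborel)))"
    by (simp add: nn_integral_cmult nn_integral_add)
  also have "\<dots> \<le> ennreal (1/2) * (c * (ennreal (A * P) + ennreal (A * P)))"
    unfolding T2 by (intro mult_left_mono add_mono T1) auto
  also have "\<dots> = ennreal (1/2 * (1 / s\<^sup>2 * (A * P + A * P)))"
  proof -
    have n: "A * P \<ge> 0" "1 / s\<^sup>2 \<ge> 0" "1 / s\<^sup>2 * (A * P + A * P) \<ge> 0" using A0 P0 by auto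
    have e1: "ennreal (1/2 * (1 / s\<^sup>2 * (A * P + A * P))) = ennreal (1/2) * ennreal (1 / s\<^sup>2 * (A * P + A * P))"
      by (rule ennreal_mult) (use n in auto)
    have e2: "ennreal (1 / s\<^sup>2 * (A * P + A * P)) = ennreal (1 / s\<^sup>2) * ennreal (A * P + A * P)"
      by (rule ennreal_mult) (use n in auto)
    have e3: "ennreal (A * P + A * P) = ennreal (A * P) + ennreal (A * P)"
      by (rule ennreal_plus) (use n in auto)
    show ?thesis by (simp only: c_def e1 e2 e3)
  qed
  also have "\<dots> \<le> ennreal (2 * A)"
  proof (rule ennreal_leI)
    have "1/2 * (1 / s\<^sup>2 * (A * P + A * P)) = A * P / (P * (1 - P))"
      unfolding s2 by simp
    also have "\<dots> = A / (1 - P)" using P0 by simp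
    also have "\<dots> \<le> A / (1/2)" using A0 P0 by (intro divide_left_mono) auto
    finally show "1/2 * (1 / s\<^sup>2 * (A * P + A * P)) \<le> 2 * A" by simp
  qed
  finally show ?thesis .
qed



lemma sum_basis_nth:
  fixes f :: "real^'n \<Rightarrow> real"
  shows "(\<Sum>j\<in>Basis. f j *\<^sub>R j) $ i = f (axis i 1)"
proof -
  have "(\<Sum>j\<in>Basis. f j *\<^sub>R j) $ i = (\<Sum>j\<in>Basis. f j * (j $ i))"
    by (simp add: sum_component)
  also have "\<dots> = (\<Sum>j\<in>Basis. if j = axis i 1 then f j else 0)"
    by (rule sum.cong) (auto simp: Basis_vec_def axis_def vec_eq_iff split: if_splits)
  also have "\<dots> = f (axis i 1)" by simp
  finally show ?thesis .
qed

context mhctx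
begin

lemma pl_total:
  assumes l: "l > 0"
  shows "(\<integral>\<^sup>+ x. ennreal (pi_scaled i1 l \<pi> x) \<partial>lborel) = 1"
proof -
  define c where "c j = (if j = axis i1 (1::real) then l else 1)" for j :: "real^'n"
  define T where "T x = (0::real^'n) + (\<Sum>j\<in>Basis. (c j * (x \<bullet> j)) *\<^sub>R j)" for x
  have L: "lborel = density (distr lborel borel T) (\<lambda>_. (\<Prod>j\<in>Basis. \<bar>c j\<bar>))"
    unfolding T_def[abs_def] using l by (intro lborel_affine_euclidean) (auto simp: c_def)
  have pc: "(\<Prod>j\<in>(Basis::(real^'n) set). \<bar>c j\<bar>) = l"
  proof -
    have "(\<Prod>j\<in>(Basis::(real^'n) set). \<bar>c j\<bar>) = (\<Prod>j\<in>(Basis::(real^'n) set). if j = axis i1 1 then l else 1)"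
      using l by (intro prod.cong) (auto simp: c_def)
    also have "\<dots> = l" by simp
    finally show ?thesis .
  qed
  have Tn: "T x $ i = (if i = i1 then l * x $ i else x $ i)" for x i
    unfolding T_def add_0_left sum_basis_nth by (simp add: c_def cart_eq_inner_axis[symmetric] axis_eq_axis)
  have ScT: "Sc l (T x) = x" for x using l by (simp add: vec_eq_iff Sc_nth Tn)
  have Tm: "T \<in> borel_measurable borel"
    unfolding T_def by measurable
  have plm: "(\<lambda>x. ennreal (pi_scaled i1 l \<pi> x)) \<in> borel_measurable borel"
    using pl_meas by measurable
  have "(\<integral>\<^sup>+ x. ennreal (pi_scaled i1 l \<pi> x) \<partial>lborel)
      = (\<integral>\<^sup>+ x. ennreal (pi_scaled i1 l \<pi> x) \<partial>(density (distr lborel borel T) (\<lambda>_. (\<Prod>j\<in>Basis. \<bar>c j\<bar>))))"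
    using L by simp
  also have "\<dots> = (\<integral>\<^sup>+ x. ennreal l * ennreal (pi_scaled i1 l \<pi> x) \<partial>(distr lborel borel T))"
    using plm by (subst nn_integral_density) (auto simp: pc)
  also have "\<dots> = (\<integral>\<^sup>+ x. ennreal l * ennreal (pi_scaled i1 l \<pi> (T x)) \<partial>lborel)"
    using plm Tm by (subst nn_integral_distr) auto
  also have "\<dots> = (\<integral>\<^sup>+ x. ennreal (\<pi> x) \<partial>lborel)"
  proof (rule nn_integral_cong)
    fix x
    have "l * pi_scaled i1 l \<pi> (T x) = \<pi> x" using l by (simp add: pl_def' ScT)
    then show "ennreal l * ennreal (pi_scaled i1 l \<pi> (T x)) = ennreal (\<pi> x)"
      using l ennreal_mult'[of l "pi_scaled i1 l \<pi> (T x)"] by simp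
  qed
  finally show ?thesis using dens by simp
qed

end


context mhctx
begin

definition "Bs = cbox (\<chi> i. if i = i1 then 1 else -2) (\<chi> i. (2::real))"

lemma Bs_mem: "x \<in> Bs \<longleftrightarrow> (1 \<le> x $ i1 \<and> x $ i1 \<le> 2 \<and> (\<forall>i. -2 \<le> x $ i \<and> x $ i \<le> 2))"
proof -
  have "x \<in> Bs \<longleftrightarrow> (\<forall>i. (if i = i1 then 1 else -2) \<le> x $ i \<and> x $ i \<le> 2)"
    unfolding Bs_def mem_box_cart by simp
  also have "\<dots> \<longleftrightarrow> (1 \<le> x $ i1 \<and> x $ i1 \<le> 2 \<and> (\<forall>i. -2 \<le> x $ i \<and> x $ i \<le> 2))"
  proof
    assume H: "\<forall>i. (if i = i1 then 1 else -2) \<le> x $ i \<and> x $ i \<le> 2"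
    have a: "1 \<le> x $ i1 \<and> x $ i1 \<le> 2" using H[rule_format, of i1] by simp
    have b: "-2 \<le> x $ i \<and> x $ i \<le> 2" for i
    proof (cases "i = i1")
      case True then show ?thesis using a by simp
    next
      case False then show ?thesis using H[rule_format, of i] by simp
    qed
    show "1 \<le> x $ i1 \<and> x $ i1 \<le> 2 \<and> (\<forall>i. -2 \<le> x $ i \<and> x $ i \<le> 2)" using a b by blast
  next
    assume H: "1 \<le> x $ i1 \<and> x $ i1 \<le> 2 \<and> (\<forall>i. -2 \<le> x $ i \<and> x $ i \<le> 2)"
    show "\<forall>i. (if i = i1 then 1 else -2) \<le> x $ i \<and> x $ i \<le> 2"
    proof
      fix i show "(if i = i1 then 1 else -2) \<le> x $ i \<and> x $ i \<le> 2"
        using H by (cases "i = i1") auto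
    qed
  qed
  finally show ?thesis .
qed

lemma shift_eq: "y + a *\<^sub>R axis i1 1 = upd i1 y (y $ i1 + a)"
  by (simp add: vec_eq_iff upd_nth axis_def)

lemma pl_shift: "pi_scaled i1 l \<pi> (y + a *\<^sub>R axis i1 1) = \<pi>1 ((y $ i1 + a) / l) * \<pi>2 y / l"
  by (simp add: pl_eq shift_eq upd_nth \<pi>2_upd)

lemma plm_borel: "(\<lambda>x. ennreal (pi_scaled i1 l \<pi> x)) \<in> borel_measurable borel"
  using pl_meas by measurable

lemma pl_shift_total:
  assumes l: "l > 0"
  shows "(\<integral>\<^sup>+ y. ennreal (pi_scaled i1 l \<pi> (y + a *\<^sub>R axis i1 1)) \<partial>lborel) = 1"
  using shift_inv[OF plm_borel, of l "a *\<^sub>R axis i1 1"] pl_total[OF l] by simp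

lemma c2_nonneg: "c2 \<ge> 0"
proof -
  have "\<bar>h T0\<bar> \<le> c2 * \<bar>T0\<bar> powr q" using tconsts(4)[of T0] tconsts(1) by simp
  moreover have "\<bar>T0\<bar> powr q > 0" using tconsts(1) by simp
  moreover have "0 \<le> \<bar>h T0\<bar>" by simp
  ultimately have "0 \<le> c2 * \<bar>T0\<bar> powr q" "\<bar>T0\<bar> powr q > 0" by linarith+
  then show ?thesis by (simp add: zero_le_mult_iff)
qed

lemma m2_ex: "\<exists>m2>0. \<forall>x\<in>Bs. \<pi>2 x \<ge> m2"
proof -
  define C :: "(real^'n) set" where "C = cbox (\<chi> i. -2) (\<chi> i. (2::real))"
  have "C \<noteq> {}" by (auto simp: C_def box_ne_empty Basis_vec_def inner_axis)
  moreover have "compact C" by (simp add: C_def)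
  moreover have "continuous_on C \<pi>" using \<pi>_cont continuous_on_subset by blast
  ultimately obtain z where z: "z \<in> C" "\<forall>y\<in>C. \<pi> z \<le> \<pi> y"
    using continuous_attains_inf[of C \<pi>] by blast
  have "\<pi>2 x \<ge> \<pi> z / \<pi>1 0" if x: "x \<in> Bs" for x
  proof -
    have "upd i1 x 0 \<in> C" using x by (auto simp: C_def mem_box_cart upd_nth Bs_mem)
    then have "\<pi> z \<le> \<pi>1 0 * \<pi>2 x" using z \<pi>_upd by metis
    then show ?thesis using \<pi>1_pos[of 0] by (simp add: divide_le_eq mult.commute)
  qed
  moreover have "\<pi> z / \<pi>1 0 > 0" using pos \<pi>1_pos by simp
  ultimately show ?thesis by blast
qed

definition "m2 = (SOME m2. m2 > 0 \<and> (\<forall>x\<in>Bs. \<pi>2 x \<ge> m2))"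

lemma m2: "m2 > 0" "x \<in> Bs \<Longrightarrow> \<pi>2 x \<ge> m2"
  using someI_ex[OF m2_ex[unfolded Bex_def]] unfolding m2_def by auto

definition "Lb l = \<pi>1 T0 * exp (- c2 * (2 / l) powr q * (2 / l)) * m2 / l"

lemma Lb_pos: "l > 0 \<Longrightarrow> Lb l > 0"
  using m2(1) \<pi>1_pos by (simp add: Lb_def)

lemma pl_lower:
  assumes l: "l > 0" "l * T0 \<le> 1" and x: "x \<in> Bs"
  shows "pi_scaled i1 l \<pi> x \<ge> Lb l"
proof -
  let ?t = "x $ i1 / l"
  have t1: "?t \<ge> 1 / l" "?t \<le> 2 / l" using x l by (auto simp: Bs_mem divide_right_mono)
  have "T0 \<le> 1 / l" using l by (simp add: field_simps)
  then have tT: "T0 \<le> ?t" using t1 by linarith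
  have "\<pi>1 ?t \<ge> \<pi>1 T0 * exp (- c2 * ?t powr q * ?t)" by (rule lower_right[OF tT])
  moreover have "exp (- c2 * ?t powr q * ?t) \<ge> exp (- c2 * (2 / l) powr q * (2 / l))"
  proof -
    have "?t powr q \<le> (2 / l) powr q" using t1 tconsts(1) tT q(1) by (intro powr_mono2) auto
    moreover have "?t powr q \<ge> 0" by simp
    ultimately have "?t powr q * ?t \<le> (2 / l) powr q * (2 / l)"
      using t1 tT tconsts(1) by (intro mult_mono) auto
    then have "c2 * (?t powr q * ?t) \<le> c2 * ((2 / l) powr q * (2 / l))"
      using c2_nonneg by (intro mult_left_mono) auto
    then show ?thesis by (simp add: mult.assoc)
  qed
  moreover have "\<pi>1 T0 * exp (- c2 * ?t powr q * ?t) \<ge> \<pi>1 T0 * exp (- c2 * (2 / l) powr q * (2 / l))"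
    using calculation(2) \<pi>1_pos[of T0] by (intro mult_left_mono) auto
  ultimately have "\<pi>1 ?t \<ge> \<pi>1 T0 * exp (- c2 * (2 / l) powr q * (2 / l))"
    by linarith
  moreover have "\<pi>2 x \<ge> m2" using m2(2)[OF x] .
  ultimately have "\<pi>1 ?t * \<pi>2 x \<ge> \<pi>1 T0 * exp (- c2 * (2 / l) powr q * (2 / l)) * m2"
    using m2(1) \<pi>1_pos[of T0] \<pi>1_pos[of "x $ i1 / l"] by (intro mult_mono) auto
  then show ?thesis using l by (simp add: pl_eq Lb_def divide_right_mono)
qed

end


context mhctx
begin

definition "Kc l = \<sigma>\<^sup>2 * c1 / (2 * l)"
definition "Cg = (2 * pi * \<sigma>\<^sup>2) powr (- real CARD('n) / 2)"
definition "Aval l = exp (- (Kc l / 2)\<^sup>2 / (4 * \<sigma>\<^sup>2)) * 2 powr (real CARD('n) / 2)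
                   + Cg * exp (- c1 * (Kc l / 4 / l)) / Lb l"
definition "good l \<longleftrightarrow> 0 < l \<and> 2 * l * T0 \<le> 1 \<and> l \<le> c1 / 2 \<and> 2 + T0 \<le> Kc l / 4 \<and> l \<le> 1"

lemma ql_cont:
  assumes l: "l > 0"
  shows "continuous_on UNIV (\<lambda>z. mala_q \<sigma> (pi_scaled i1 l \<pi>) (fst z) (snd z))"
proof -
  let ?G = "grad (\<lambda>z. ln (pi_scaled i1 l \<pi> z))"
  have "continuous_on UNIV (\<lambda>z::(real^'n)\<times>(real^'n). ?G (fst z))"
    using continuous_on_compose2[OF grad_pl_cont[OF l] continuous_on_fst[OF continuous_on_id]] by simp
  then show ?thesis
    unfolding mala_q_def gauss_dens_def by (intro continuous_intros) (use \<sigma> in auto)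
qed

lemma ql_pos: "mala_q \<sigma> p x y > 0"
  using \<sigma> by (simp add: mala_q_def gauss_pos)

lemma pl_int:
  assumes l: "l > 0"
  shows "integrable lborel (pi_scaled i1 l \<pi>)"
  using pl_meas pl_pos[OF l] pl_total[OF l]
  by (intro integrableI_nonneg) (auto simp: less_imp_le top_unique)

lemma Bs_sets: "Bs \<in> sets borel" by (simp add: Bs_def)

lemma Bs_meas: "emeasure lborel Bs > 0"
proof -
  let ?a = "(\<chi> i. if i = i1 then 1 else -2) :: real^'n" and ?b = "(\<chi> i. (2::real)) :: real^'n"
  have h1: "\<forall>b\<in>Basis. ?a \<bullet> b \<le> ?b \<bullet> b" by (auto simp: Basis_vec_def inner_axis)
  have h2: "(\<Prod>b\<in>Basis. (?b - ?a) \<bullet> b) > 0"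
    by (intro prod_pos) (auto simp: Basis_vec_def inner_axis)
  show ?thesis unfolding Bs_def using h1 h2 by (simp add: emeasure_lborel_cbox_eq)
qed

lemma P_bounds:
  assumes g: "good l"
  defines "P \<equiv> (\<integral>x. pi_scaled i1 l \<pi> x * indicator Bs x \<partial>lborel)"
  shows "0 < P" "P \<le> 1/2"
proof -
  have l: "l > 0" "l * T0 \<le> 1" "2 * l * T0 \<le> 1" "l \<le> c1 / 2" using g tconsts(1) by (auto simp: good_def)
  have Bl: "Bs \<in> sets lborel" using Bs_sets by simp
  have NN: "(\<integral>\<^sup>+x. ennreal (pi_scaled i1 l \<pi> x * indicator Bs x) \<partial>lborel) = ennreal P"
    unfolding P_def using integrable_real_mult_indicator[OF Bl pl_int[OF l(1)]] pl_pos[OF l(1)]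
    by (intro nn_integral_eq_integral) (auto simp: less_imp_le)
  have "(\<integral>\<^sup>+x. ennreal (Lb l) * indicator Bs x \<partial>lborel) \<le> (\<integral>\<^sup>+x. ennreal (pi_scaled i1 l \<pi> x * indicator Bs x) \<partial>lborel)"
    using pl_lower[OF l(1) l(2)] by (intro nn_integral_mono) (auto simp: indicator_def ennreal_leI)
  moreover have "(\<integral>\<^sup>+x. ennreal (Lb l) * indicator Bs x \<partial>lborel) = ennreal (Lb l) * emeasure lborel Bs"
    using Bl by (simp add: nn_integral_cmult_indicator)
  moreover have "ennreal (Lb l) * emeasure lborel Bs > 0"
    using Lb_pos[OF l(1)] Bs_meas by (simp add: ennreal_zero_less_mult_iff)
  ultimately have "ennreal P > 0" using NN by (metis order_less_le_trans)
  then show "0 < P" by (simp add: ennreal_less_zero_iff)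
  have "(\<integral>\<^sup>+x. ennreal (pi_scaled i1 l \<pi> x * indicator Bs x) \<partial>lborel)
      \<le> (\<integral>\<^sup>+x. ennreal (exp (- c1 * (1 / (2 * l)))) * ennreal (pi_scaled i1 l \<pi> (x + (- 1/2) *\<^sub>R axis i1 1)) \<partial>lborel)"
  proof (rule nn_integral_mono)
    fix x
    show "ennreal (pi_scaled i1 l \<pi> x * indicator Bs x)
        \<le> ennreal (exp (- c1 * (1 / (2 * l)))) * ennreal (pi_scaled i1 l \<pi> (x + (- 1/2) *\<^sub>R axis i1 1))"
    proof (cases "x \<in> Bs")
      case False then show ?thesis by simp
    next
      case True
      let ?t = "x $ i1 / l" and ?s = "(x $ i1 + - 1/2) / l"
      have x1: "1 \<le> x $ i1" using True by (simp add: Bs_mem)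
      have "1 / (2 * l) \<le> ?s" using x1 l by (simp add: field_simps)
      moreover have "T0 \<le> 1 / (2 * l)" using l by (simp add: field_simps)
      ultimately have sT: "T0 \<le> ?s" by linarith
      have st: "?s \<le> ?t" using l by (simp add: divide_right_mono)
      have td: "?t - ?s = 1 / (2 * l)" using l by (simp add: field_simps)
      have "\<pi>1 ?t \<le> exp (- c1 * (1 / (2 * l))) * \<pi>1 ?s"
        using ratio_right[OF sT st] td by simp
      then have "\<pi>1 ?t * \<pi>2 x / l \<le> exp (- c1 * (1 / (2 * l))) * \<pi>1 ?s * \<pi>2 x / l"
        using \<pi>2_pos[of x] l by (intro divide_right_mono mult_right_mono) auto
      moreover have ps: "pi_scaled i1 l \<pi> (x + (- 1/2) *\<^sub>R axis i1 1) = \<pi>1 ?s * \<pi>2 x / l" by (rule pl_shift)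
      moreover have pe: "pi_scaled i1 l \<pi> x = \<pi>1 ?t * \<pi>2 x / l" by (rule pl_eq)
      ultimately have "pi_scaled i1 l \<pi> x \<le> exp (- c1 * (1 / (2 * l))) * pi_scaled i1 l \<pi> (x + (- 1/2) *\<^sub>R axis i1 1)"
        by (simp only: mult.assoc times_divide_eq_right)
      then show ?thesis using True by (simp add: ennreal_mult'[symmetric] ennreal_leI)
    qed
  qed
  also have "\<dots> = ennreal (exp (- c1 * (1 / (2 * l))))"
    using pl_shift_total[OF l(1), of "- 1/2"] plm_borel
    by (subst nn_integral_cmult) (auto simp: measurable_compose[OF _ plm_borel])
  finally have "P \<le> exp (- c1 * (1 / (2 * l)))" using NN by (simp add: ennreal_le_iff)
  also have "\<dots> \<le> exp (- 1)"
  proof -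
    have "1 \<le> c1 * (1 / (2 * l))" using l tconsts(2) by (simp add: field_simps)
    then show ?thesis by simp
  qed
  also have "\<dots> \<le> 1/2"
  proof -
    have "2 \<le> exp (1::real)" using exp_ge_add_one_self[of 1] by simp
    then show ?thesis by (simp add: exp_minus field_simps)
  qed
  finally show "P \<le> 1/2" .
qed

end


lemma gauss_meas[measurable]: "(\<lambda>y. ennreal (gauss_dens s m (y::real^'n))) \<in> borel_measurable lborel"
  unfolding gauss_dens_def by measurable

context mhctx
begin

lemma AB:
  assumes g: "good l" and x: "x \<in> Bs"
  shows "(\<integral>\<^sup>+y. ennreal (min (pi_scaled i1 l \<pi> x * mala_q \<sigma> (pi_scaled i1 l \<pi>) x y)
                                (pi_scaled i1 l \<pi> y * mala_q \<sigma> (pi_scaled i1 l \<pi>) y x)) \<partial>lborel)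
         \<le> ennreal (pi_scaled i1 l \<pi> x * Aval l)"
proof -
  let ?p = "pi_scaled i1 l \<pi>"
  let ?q = "mala_q \<sigma> ?p"
  define K where "K = Kc l"
  define m where "m = x + (\<sigma>\<^sup>2 / 2) *\<^sub>R grad (\<lambda>z. ln (?p z)) x"
  define E1 where "E1 = exp (- (K / 2)\<^sup>2 / (4 * \<sigma>\<^sup>2)) * 2 powr (real CARD('n) / 2)"
  define C2 where "C2 = Cg * exp (- c1 * (K / 4 / l))"
  have l: "l > 0" "2 * l * T0 \<le> 1" "l \<le> c1 / 2" "2 + T0 \<le> K / 4" "l \<le> 1"
    using g by (auto simp: good_def K_def)
  have Kpos: "K > 0" using l tconsts(1) by linarith
  have qx: "?q x y = gauss_dens \<sigma> m y" for y by (simp add: mala_q_def m_def)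
  have E1nn: "E1 \<ge> 0" by (simp add: E1_def)
  have C2nn: "C2 \<ge> 0" by (simp add: C2_def Cg_def)
  have pxpos: "?p x > 0" using pl_pos[OF l(1)] .
  have m1: "m $ i1 \<le> 2 - K"
  proof -
    let ?t = "x $ i1 / l"
    have "1 \<le> x $ i1" "x $ i1 \<le> 2" using x by (auto simp: Bs_mem)
    then have "1 / l \<le> ?t" using l by (simp add: divide_right_mono)
    moreover have "T0 \<le> 1 / l" using l tconsts(1) by (simp add: field_simps)
    ultimately have "T0 \<le> ?t" by linarith
    then have ht: "h ?t \<le> - c1" by (rule h_right)
    have "m $ i1 = x $ i1 + \<sigma>\<^sup>2 / 2 * (h ?t / l)"
      by (simp add: m_def grad_pl_i1[OF l(1)])
    also have "\<sigma>\<^sup>2 / 2 * (h ?t / l) \<le> \<sigma>\<^sup>2 / 2 * (- c1 / l)"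
      using ht l by (intro mult_left_mono divide_right_mono) auto
    also have "\<sigma>\<^sup>2 / 2 * (- c1 / l) = - K" by (simp add: K_def Kc_def)
    finally show ?thesis using \<open>x $ i1 \<le> 2\<close> by linarith
  qed
  have pw: "ennreal (min (?p x * ?q x y) (?p y * ?q y x))
      \<le> ennreal (?p x * E1) * ennreal (gauss_dens (sqrt 2 * \<sigma>) m y)
        + ennreal C2 * ennreal (?p (y + (K / 4) *\<^sub>R axis i1 1))" for y
  proof (cases "2 - K / 2 \<le> y $ i1")
    case True
    have d: "K / 2 \<le> y $ i1 - m $ i1" using True m1 by linarith
    have "K / 2 \<le> \<bar>(y - m) $ i1\<bar>" using order_trans[OF d abs_ge_self[of "y $ i1 - m $ i1"]] by simp
    also have "\<dots> \<le> norm (y - m)" by (rule component_le_norm_cart)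
    finally have "K / 2 \<le> norm (y - m)" .
    then have "gauss_dens \<sigma> m y \<le> E1 * gauss_dens (sqrt 2 * \<sigma>) m y"
      using gauss_far[OF \<sigma>, of "K / 2" y m] Kpos by (simp add: E1_def)
    then have "?p x * ?q x y \<le> ?p x * E1 * gauss_dens (sqrt 2 * \<sigma>) m y"
      using pxpos by (simp add: qx mult.assoc)
    then have "min (?p x * ?q x y) (?p y * ?q y x) \<le> ?p x * E1 * gauss_dens (sqrt 2 * \<sigma>) m y"
      by linarith
    then have "ennreal (min (?p x * ?q x y) (?p y * ?q y x)) \<le> ennreal (?p x * E1) * ennreal (gauss_dens (sqrt 2 * \<sigma>) m y)"
    proof -
      have "ennreal (?p x * E1) * ennreal (gauss_dens (sqrt 2 * \<sigma>) m y) = ennreal (?p x * E1 * gauss_dens (sqrt 2 * \<sigma>) m y)"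
        by (rule ennreal_mult'[symmetric]) (use pxpos E1nn in simp)
      then show ?thesis using \<open>min (?p x * ?q x y) (?p y * ?q y x) \<le> ?p x * E1 * gauss_dens (sqrt 2 * \<sigma>) m y\<close>
        by (simp add: ennreal_leI)
    qed
    then show ?thesis by (rule order_trans) simp
  next
    case False
    let ?s = "y $ i1 / l" and ?s' = "(y $ i1 + K / 4) / l"
    have ss: "?s \<le> ?s'" using l Kpos by (simp add: divide_right_mono)
    have "y $ i1 + K / 4 \<le> - T0" using False l by linarith
    also have "- T0 \<le> - (l * T0)" using l tconsts(1) by (simp add: mult_le_cancel_right1)
    finally have A: "y $ i1 + K / 4 \<le> - (l * T0)" .
    have "?s' \<le> - (l * T0) / l" using A l by (intro divide_right_mono) auto
    moreover have "- (l * T0) / l = - T0" using l by simp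
    ultimately have sT: "?s' \<le> - T0" by linarith
    have d: "?s' - ?s = K / 4 / l" using l by (simp add: field_simps)
    have "\<pi>1 ?s \<le> exp (- c1 * (K / 4 / l)) * \<pi>1 ?s'"
      using ratio_left[OF ss sT] d by simp
    then have "\<pi>1 ?s * \<pi>2 y / l \<le> exp (- c1 * (K / 4 / l)) * \<pi>1 ?s' * \<pi>2 y / l"
      using \<pi>2_pos[of y] l by (intro divide_right_mono mult_right_mono) auto
    moreover have ps: "?p (y + (K / 4) *\<^sub>R axis i1 1) = \<pi>1 ?s' * \<pi>2 y / l" by (rule pl_shift)
    moreover have pe: "?p y = \<pi>1 ?s * \<pi>2 y / l" by (rule pl_eq)
    ultimately have py: "?p y \<le> exp (- c1 * (K / 4 / l)) * ?p (y + (K / 4) *\<^sub>R axis i1 1)"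
      by (simp only: mult.assoc times_divide_eq_right)
    have qy: "?q y x \<le> Cg" using gauss_le[OF \<sigma>] by (simp add: mala_q_def Cg_def)
    have "?p y * ?q y x \<le> ?p y * Cg"
      using pl_pos[OF l(1), of y] qy by (intro mult_left_mono) auto
    also have "\<dots> \<le> exp (- c1 * (K / 4 / l)) * ?p (y + (K / 4) *\<^sub>R axis i1 1) * Cg"
      using py by (intro mult_right_mono) (auto simp: Cg_def)
    also have "\<dots> = C2 * ?p (y + (K / 4) *\<^sub>R axis i1 1)" by (simp add: C2_def mult_ac)
    finally have "min (?p x * ?q x y) (?p y * ?q y x) \<le> C2 * ?p (y + (K / 4) *\<^sub>R axis i1 1)"
      by linarith
    then have "ennreal (min (?p x * ?q x y) (?p y * ?q y x)) \<le> ennreal C2 * ennreal (?p (y + (K / 4) *\<^sub>R axis i1 1))"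
    proof -
      have "ennreal C2 * ennreal (?p (y + (K / 4) *\<^sub>R axis i1 1)) = ennreal (C2 * ?p (y + (K / 4) *\<^sub>R axis i1 1))"
        by (rule ennreal_mult'[symmetric]) (use C2nn in simp)
      then show ?thesis using \<open>min (?p x * ?q x y) (?p y * ?q y x) \<le> C2 * ?p (y + (K / 4) *\<^sub>R axis i1 1)\<close>
        by (simp add: ennreal_leI)
    qed
    then show ?thesis by (rule order_trans) simp
  qed
  have shm: "(\<lambda>y. ennreal (?p (y + (K / 4) *\<^sub>R axis i1 1))) \<in> borel_measurable lborel"
    using plm_borel by measurable
  have "(\<integral>\<^sup>+y. ennreal (min (?p x * ?q x y) (?p y * ?q y x)) \<partial>lborel)
      \<le> (\<integral>\<^sup>+y. ennreal (?p x * E1) * ennreal (gauss_dens (sqrt 2 * \<sigma>) m y)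
        + ennreal C2 * ennreal (?p (y + (K / 4) *\<^sub>R axis i1 1)) \<partial>lborel)"
    by (rule nn_integral_mono) (rule pw)
  also have "\<dots> = ennreal (?p x * E1) * (\<integral>\<^sup>+y. ennreal (gauss_dens (sqrt 2 * \<sigma>) m y) \<partial>lborel)
        + ennreal C2 * (\<integral>\<^sup>+y. ennreal (?p (y + (K / 4) *\<^sub>R axis i1 1)) \<partial>lborel)"
    using shm by (simp add: nn_integral_add nn_integral_cmult)
  also have "\<dots> = ennreal (?p x * E1) + ennreal C2"
    using gauss_total[of "sqrt 2 * \<sigma>" m] \<sigma> pl_shift_total[OF l(1)] by simp
  also have "\<dots> = ennreal (?p x * E1 + C2)" using pxpos E1nn C2nn by simp
  also have "\<dots> \<le> ennreal (?p x * Aval l)"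
  proof (rule ennreal_leI)
    have Lb: "Lb l > 0" "Lb l \<le> ?p x"
      using Lb_pos[OF l(1)] pl_lower[OF l(1) _ x] l tconsts(1) by auto
    have "C2 = Lb l * (C2 / Lb l)" using Lb by simp
    also have "\<dots> \<le> ?p x * (C2 / Lb l)" using Lb C2nn by (intro mult_right_mono) auto
    finally have "C2 \<le> ?p x * (C2 / Lb l)" .
    moreover have "Aval l = E1 + C2 / Lb l" by (simp add: Aval_def E1_def C2_def K_def)
    ultimately show "?p x * E1 + C2 \<le> ?p x * Aval l" by (simp add: distrib_left)
  qed
  finally show ?thesis .
qed

lemma gap_conc:
  assumes g: "good l"
  shows "mh_gap (pi_scaled i1 l \<pi>) (mala_q \<sigma> (pi_scaled i1 l \<pi>)) \<le> ennreal (2 * Aval l)"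
proof -
  have l: "l > 0" using g by (simp add: good_def)
  have A0: "Aval l \<ge> 0"
    using Lb_pos[OF l] by (simp add: Aval_def Cg_def)
  show ?thesis
    using P_bounds[OF g]
    by (intro gap_le[OF _ pl_meas pl_total[OF l] _ ql_cont[OF l] Bs_sets refl _ _ A0])
       (auto simp: pl_pos[OF l] ql_pos AB[OF g])
qed

end


lemma Y_eq:
  assumes l: "(l::real) > 0"
  shows "l powr (- (1 + q)) = l powr (1 - q) / l\<^sup>2"
proof -
  have "l powr (- (1 + q)) = l powr ((1 - q) - 2)" by simp
  also have "\<dots> = l powr (1 - q) / l powr 2" by (rule powr_diff)
  also have "l powr 2 = l\<^sup>2" using l by (simp add: powr_numeral)
  finally show ?thesis .
qed

lemma exponent_bound:
  assumes l: "(l::real) > 0" and B: "B \<ge> 0" and c: "B * l powr (1 - q) + l \<le> a"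
  shows "B * l powr (- (1 + q)) + 1 / l \<le> a / l\<^sup>2"
proof -
  have "B * l powr (- (1 + q)) + 1 / l = (B * l powr (1 - q) + l) / l\<^sup>2"
    using l unfolding Y_eq[OF l] by (simp add: field_simps power2_eq_square)
  also have "\<dots> \<le> a / l\<^sup>2" using c l by (intro divide_right_mono) auto
  finally show ?thesis .
qed

lemma W_bound:
  assumes l: "(l::real) > 0" and q: "0 \<le> q" "q \<le> 1"
  shows "(2 / l) powr q * (2 / l) \<le> 4 * l powr (- (1 + q))"
proof -
  have "(2 / l) powr q = 2 powr q / l powr q" by (rule powr_divide)
  also have "\<dots> \<le> 2 / l powr q"
  proof -
    have "2 powr q \<le> 2 powr 1" using q by (intro powr_mono) auto
    then show ?thesis using l by (intro divide_right_mono) auto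
  qed
  finally have a: "(2 / l) powr q \<le> 2 / l powr q" .
  have "(2 / l) powr q * (2 / l) \<le> 2 / l powr q * (2 / l)"
    using a l by (intro mult_right_mono) auto
  also have "\<dots> = 4 / (l * l powr q)" by simp
  also have "l powr (- (1 + q)) = 1 / (l * l powr q)"
  proof -
    have "l powr (- (1 + q)) = inverse (l powr 1 * l powr q)" by (simp only: powr_minus powr_add)
    then show ?thesis using l by (simp add: divide_inverse)
  qed
  ultimately show ?thesis by simp
qed

context mhctx
begin

definition "Cf = 2 * (2 powr (real CARD('n) / 2) + Cg / (\<pi>1 T0 * m2))"

lemma final_bound:
  "\<exists>\<delta>>0. \<forall>l. 0 < l \<and> l < \<delta> \<longrightarrow> good l \<and>
      2 * Aval l * exp (1 * l powr (- (1 + q)) - q * ln l) \<le> Cf"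
proof -
  define a1 where "a1 = \<sigma>\<^sup>2 * c1\<^sup>2 / 64"
  define a2 where "a2 = \<sigma>\<^sup>2 * c1\<^sup>2 / 8"
  define B2 where "B2 = 4 * c2 + 1"
  define amin where "amin = min a1 a2"
  define \<delta>0 where "\<delta>0 = (amin / (2 * B2)) powr (1 / (1 - q))"
  define \<delta> where "\<delta> = min (min (min 1 (1 / (2 * T0))) (min (c1 / 2) (\<sigma>\<^sup>2 * c1 / (8 * (2 + T0))))) (min (amin / 2) \<delta>0)"
  have a1p: "a1 > 0" and a2p: "a2 > 0" using \<sigma> tconsts(2) by (auto simp: a1_def a2_def)
  have B2: "B2 \<ge> 1" using c2_nonneg by (simp add: B2_def)
  have aminp: "amin > 0" using a1p a2p by (simp add: amin_def)
  have \<delta>0p: "\<delta>0 > 0" using aminp B2 by (simp add: \<delta>0_def)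
  have \<delta>p: "\<delta> > 0" using \<delta>0p aminp tconsts \<sigma> by (simp add: \<delta>_def)
  have main: "good l \<and> 2 * Aval l * exp (1 * l powr (- (1 + q)) - q * ln l) \<le> Cf"
    if l0: "0 < l" and ld: "l < \<delta>" for l
  proof -
    have l1: "l \<le> 1" "l \<le> 1 / (2 * T0)" "l \<le> c1 / 2" "l \<le> \<sigma>\<^sup>2 * c1 / (8 * (2 + T0))"
      "l \<le> amin / 2" "l \<le> \<delta>0"
    proof -
      have "l < 1 \<and> l < 1 / (2 * T0) \<and> l < c1 / 2 \<and> l < \<sigma>\<^sup>2 * c1 / (8 * (2 + T0)) \<and> l < amin / 2 \<and> l < \<delta>0"
        using ld unfolding \<delta>_def min_less_iff_conj by blast
      then show "l \<le> 1" "l \<le> 1 / (2 * T0)" "l \<le> c1 / 2" "l \<le> \<sigma>\<^sup>2 * c1 / (8 * (2 + T0))"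
        "l \<le> amin / 2" "l \<le> \<delta>0" by auto
    qed
    have T0p: "T0 > 0" using tconsts(1) by simp
    have g: "good l"
    proof -
      have "2 * l * T0 \<le> 1" using l1(2) T0p by (simp add: field_simps)
      moreover have "2 + T0 \<le> Kc l / 4"
        using l1(4) l0 T0p by (simp add: Kc_def field_simps)
      ultimately show ?thesis using l0 l1 by (simp add: good_def)
    qed
    have lq: "l powr (1 - q) \<le> amin / (2 * B2)"
    proof -
      have "l powr (1 - q) \<le> \<delta>0 powr (1 - q)" using l0 l1(6) q by (intro powr_mono2) auto
      also have "\<delta>0 powr (1 - q) = amin / (2 * B2)"
        using q aminp B2 by (simp add: \<delta>0_def powr_powr)
      finally show ?thesis .
    qed
    have cond: "B2 * l powr (1 - q) + l \<le> amin"
    proof -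
      have "B2 * l powr (1 - q) \<le> B2 * (amin / (2 * B2))" using lq B2 by (intro mult_left_mono) auto
      also have "\<dots> = amin / 2" using B2 by simp
      finally show ?thesis using l1(5) by linarith
    qed
    define Y where "Y = l powr (- (1 + q))"
    have Ynn: "Y \<ge> 0" by (simp add: Y_def)
    have eb2: "B2 * Y + 1 / l \<le> a2 / l\<^sup>2"
    proof -
      have "B2 * l powr (1 - q) + l \<le> a2" using cond by (simp add: amin_def)
      then show ?thesis unfolding Y_def using exponent_bound[OF l0, of B2 q a2] B2 by simp
    qed
    have eb1: "1 * Y + 1 / l \<le> a1 / l\<^sup>2"
    proof -
      have "1 * l powr (1 - q) + l \<le> a1"
      proof -
        have "1 * l powr (1 - q) \<le> B2 * l powr (1 - q)" using B2 by (intro mult_right_mono) auto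
        moreover have "amin \<le> a1" by (simp add: amin_def)
        ultimately show ?thesis using cond by linarith
      qed
      then show ?thesis unfolding Y_def using exponent_bound[OF l0, of 1 q a1] by simp
    qed
    have lnl: "- q * ln l \<le> 1 / l" and lnl0: "ln l \<le> 0"
    proof -
      show "ln l \<le> 0" using l0 l1(1) by simp
      then have "- q * ln l \<le> - ln l" using q by (simp add: mult_le_cancel_right1)
      also have "- ln l = ln (1 / l)" using l0 by (simp add: ln_div)
      also have "\<dots> \<le> 1 / l" using l0 by (intro ln_bound) simp
      finally show "- q * ln l \<le> 1 / l" .
    qed
    define E where "E = exp (1 * l powr (- (1 + q)) - q * ln l)"
    have t1: "exp (- (Kc l / 2)\<^sup>2 / (4 * \<sigma>\<^sup>2)) * 2 powr (real CARD('n) / 2) * E \<le> 2 powr (real CARD('n) / 2)"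
    proof -
      have k: "(Kc l / 2)\<^sup>2 / (4 * \<sigma>\<^sup>2) = a1 / l\<^sup>2"
        using \<sigma> l0 by (simp add: Kc_def a1_def field_simps power2_eq_square)
      have "exp (- (Kc l / 2)\<^sup>2 / (4 * \<sigma>\<^sup>2)) * E = exp (- (a1 / l\<^sup>2)) * exp (Y - q * ln l)"
        by (simp add: E_def Y_def k)
      also have "\<dots> = exp (- (a1 / l\<^sup>2) + (Y - q * ln l))" by (rule exp_add[symmetric])
      also have "\<dots> \<le> 1" using eb1 lnl by simp
      finally show ?thesis by (simp add: mult.commute mult.left_commute mult_le_cancel_left1)
    qed
    define W where "W = (2 / l) powr q * (2 / l)"
    have WY: "W \<le> 4 * Y" unfolding W_def Y_def using W_bound[OF l0] q by simp
    have t2: "Cg * exp (- c1 * (Kc l / 4 / l)) / Lb l * E \<le> Cg / (\<pi>1 T0 * m2)"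
    proof -
      have k: "c1 * (Kc l / 4 / l) = a2 / l\<^sup>2"
        using l0 by (simp add: Kc_def a2_def field_simps power2_eq_square)
      have Lb: "Lb l = \<pi>1 T0 * m2 * exp (- (c2 * W)) / l"
        by (simp add: Lb_def W_def mult_ac)
      have lE: "l * exp (- q * ln l) \<le> 1"
      proof -
        have "exp ((1 - q) * ln l) = exp (ln l + (- q * ln l))" by (simp add: algebra_simps)
        also have "\<dots> = exp (ln l) * exp (- q * ln l)" by (rule exp_add)
        also have "\<dots> = l * exp (- q * ln l)" using l0 by simp
        finally have "l * exp (- q * ln l) = exp ((1 - q) * ln l)" by simp
        also have "\<dots> \<le> 1" using q lnl0 by (simp add: mult_nonneg_nonpos)
        finally show ?thesis .
      qed
      have "Cg * exp (- c1 * (Kc l / 4 / l)) / Lb l * E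
          = Cg / (\<pi>1 T0 * m2) * ((l * exp (- q * ln l)) * exp (- (a2 / l\<^sup>2) + c2 * W + Y))"
      proof -
        have e1: "exp (- (a2 / l\<^sup>2) + c2 * W + Y) = exp (- (a2 / l\<^sup>2)) * exp (c2 * W) * exp Y"
          by (simp only: exp_add)
        have "E = exp (Y + (- q * ln l))" by (simp add: E_def Y_def)
        then have e2: "E = exp Y * exp (- q * ln l)" by (simp only: exp_add)
        have e3: "exp (- (c2 * W)) = inverse (exp (c2 * W))" by (rule exp_minus)
        have e4: "exp (- c1 * (Kc l / 4 / l)) = exp (- (a2 / l\<^sup>2))" using k by simp
        have nz: "l \<noteq> 0" "\<pi>1 T0 \<noteq> 0" "m2 \<noteq> 0" "exp (c2 * W) \<noteq> 0"
          using l0 m2(1) \<pi>1_pos[of T0] by auto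
        show ?thesis
          unfolding e1 e2 e4 Lb e3 using nz by (simp add: field_simps)
      qed
      also have "\<dots> \<le> Cg / (\<pi>1 T0 * m2) * (1 * 1)"
      proof -
        have "c2 * W \<le> c2 * (4 * Y)" using WY c2_nonneg by (intro mult_left_mono) auto
        moreover have "B2 * Y = Y + c2 * (4 * Y)" by (simp add: B2_def algebra_simps)
        moreover have "1 / l > 0" using l0 by simp
        ultimately have "- (a2 / l\<^sup>2) + c2 * W + Y \<le> 0" using eb2 by linarith
        then have "exp (- (a2 / l\<^sup>2) + c2 * W + Y) \<le> 1" by simp
        then show ?thesis using lE m2(1) \<pi>1_pos[of T0]
          by (intro mult_left_mono mult_mono) (auto simp: Cg_def)
      qed
      finally show ?thesis by simp
    qed
    have "2 * Aval l * E = 2 * (exp (- (Kc l / 2)\<^sup>2 / (4 * \<sigma>\<^sup>2)) * 2 powr (real CARD('n) / 2) * E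
        + Cg * exp (- c1 * (Kc l / 4 / l)) / Lb l * E)"
      by (simp add: Aval_def algebra_simps)
    also have "\<dots> \<le> 2 * (2 powr (real CARD('n) / 2) + Cg / (\<pi>1 T0 * m2))"
      using add_mono[OF t1 t2] by simp
    also have "\<dots> = Cf" by (simp add: Cf_def)
    finally show ?thesis using g by (simp add: E_def)
  qed
  show ?thesis using \<delta>p main by blast
qed

end


context mhctx
begin

lemma final:
  "\<exists>\<gamma>>0. Limsup (at_right 0)
           (\<lambda>l. mh_gap (pi_scaled i1 l \<pi>) (mala_q \<sigma> (pi_scaled i1 l \<pi>))
                 * ennreal (exp (\<gamma> * l powr (- (1 + q)) - q * ln l))) < \<infinity>"
proof -
  obtain \<delta> where \<delta>: "\<delta> > 0" and H: "\<And>l. 0 < l \<Longrightarrow> l < \<delta> \<Longrightarrow> good l \<and>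
      2 * Aval l * exp (1 * l powr (- (1 + q)) - q * ln l) \<le> Cf"
    using final_bound by blast
  have ev: "eventually (\<lambda>l. mh_gap (pi_scaled i1 l \<pi>) (mala_q \<sigma> (pi_scaled i1 l \<pi>))
                 * ennreal (exp (1 * l powr (- (1 + q)) - q * ln l)) \<le> ennreal Cf) (at_right 0)"
    unfolding eventually_at_right_field
  proof (intro exI[of _ \<delta>] conjI allI impI)
    show "(0::real) < \<delta>" by (rule \<delta>)
    fix l :: real assume l: "0 < l" "l < \<delta>"
    let ?E = "exp (1 * l powr (- (1 + q)) - q * ln l)"
    have g: "good l" and b: "2 * Aval l * ?E \<le> Cf" using H[OF l] by auto
    have "mh_gap (pi_scaled i1 l \<pi>) (mala_q \<sigma> (pi_scaled i1 l \<pi>)) * ennreal ?E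
        \<le> ennreal (2 * Aval l) * ennreal ?E"
      using gap_conc[OF g] by (rule mult_right_mono) simp
    also have "\<dots> = ennreal (2 * Aval l * ?E)" by (rule ennreal_mult''[symmetric]) simp
    also have "\<dots> \<le> ennreal Cf" using b by (rule ennreal_leI)
    finally show "mh_gap (pi_scaled i1 l \<pi>) (mala_q \<sigma> (pi_scaled i1 l \<pi>)) * ennreal ?E \<le> ennreal Cf" .
  qed
  have "Limsup (at_right 0)
           (\<lambda>l. mh_gap (pi_scaled i1 l \<pi>) (mala_q \<sigma> (pi_scaled i1 l \<pi>))
                 * ennreal (exp (1 * l powr (- (1 + q)) - q * ln l))) \<le> ennreal Cf"
    using ev by (rule Limsup_bounded)
  also have "\<dots> < \<infinity>" by simp
  finally show ?thesis by (intro exI[of _ 1]) auto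
qed

end


theorem theorem2p2:
  fixes \<pi> :: "real^'n \<Rightarrow> real" and \<pi>1 :: "real \<Rightarrow> real" and \<pi>2 :: "real^'n \<Rightarrow> real"
    and i1 :: 'n and q \<sigma> :: real
  assumes pos: "\<forall>x. \<pi> x > 0"
    and meas: "\<pi> \<in> borel_measurable lborel"
    and dens: "(\<integral>\<^sup>+ x. ennreal (\<pi> x) \<partial>lborel) = 1"
    and C1_diff: "\<forall>x. (\<lambda>z. ln (\<pi> z)) differentiable (at x)"
    and C1_cont: "continuous_on UNIV (grad (\<lambda>z. ln (\<pi> z)))"
    and prod: "\<forall>x. \<pi> x = \<pi>1 (x $ i1) * \<pi>2 x"
    and \<pi>2_indep: "\<forall>x t. \<pi>2 (\<chi> i. if i = i1 then t else x $ i) = \<pi>2 x"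
    and \<pi>1_nonneg: "\<forall>t. \<pi>1 t \<ge> 0"
    and \<pi>1_meas: "\<pi>1 \<in> borel_measurable lborel"
    and \<pi>1_dens: "(\<integral>\<^sup>+ t. ennreal (\<pi>1 t) \<partial>lborel) = 1"
    and \<pi>2_nonneg: "\<forall>x. \<pi>2 x \<ge> 0"
    and \<pi>2_meas: "\<pi>2 \<in> borel_measurable lborel"
    and q: "0 \<le> q" "q < 1"
    and theta_lo: "Liminf at_infinity
                     (\<lambda>t::real. ereal (\<bar>deriv (\<lambda>s. ln (\<pi>1 s)) t\<bar> / \<bar>t\<bar> powr q)) > 0"
    and theta_hi: "Limsup at_infinity
                     (\<lambda>t::real. ereal (\<bar>deriv (\<lambda>s. ln (\<pi>1 s)) t\<bar> / \<bar>t\<bar> powr q)) < \<infinity>"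
    and \<sigma>: "\<sigma> > 0"
  shows "\<exists>\<gamma>>0. Limsup (at_right 0)
           (\<lambda>l. mh_gap (pi_scaled i1 l \<pi>) (mala_q \<sigma> (pi_scaled i1 l \<pi>))
                 * ennreal (exp (\<gamma> * l powr (- (1 + q)) - q * ln l))) < \<infinity>"
  proof -
  have "mhctx \<pi> \<pi>1 \<pi>2 i1 q \<sigma>"
    unfolding mhctx_def using assms by blast
  then show ?thesis by (rule mhctx.final)
qed

end
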